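(* For $h_0$ fixed, there exist positive numbers $T_X$, $\varepsilon_0$ and $C$ such that for every $t\in[0,T_X]$, $\varepsilon\in(0,\varepsilon_0]$ and $i\in\{1,\dots,N\}$, the points $X_i^\varepsilon(t)$ and $\tilde X^\varepsilon_i(t)$ are defined and $$X_i^\varepsilon(t),\ \tilde X_i^\varepsilon(t)\in\mathcal A^{X^\varepsilon_{i,0,r}}_\varepsilon(d_0,h_0)\quad\text{and}\quad|X_i^\varepsilon(t)-\tilde X_i^\varepsilon(t)|\le\frac{C}{|\ln\varepsilon|}.$$
   Context: $\mathbb{R}^2_+=\{x=(x_z,x_r):x_r>0\}$, $e_z=(1,0)$, $(a_z,a_r)^\perp=(-a_r,a_z)$. Data: $N\ge2$, $X^*=(z^*,r^* )\in\mathbb{R}^2_+$, $Y_{1,0},\dots,Y_{N,0}\in\mathbb{R}^2$ with pairwise distinct radial components $Y_{i,0,r}$, $\gamma>0$, $h_0>0$; $d_0=\frac14\min_{j\ne k}|Y_{j,0,r}-Y_{k,0,r}|$; for $\varepsilon\in(0,1)$, $X^\varepsilon_{i,0}=X^*+Y_{i,0}/\sqrt{|\ln\varepsilon|}$ and $\mathcal A^{r_0}_\varepsilon(d,h)=\{(z,r):|r-r_0|\le d/\sqrt{|\ln\varepsilon|},\ |z-z^*|\le h\}$. $(X^\varepsilon_i)_i$ solves $\frac{d}{dt}X_i^\varepsilon=\frac{\gamma}{4\pi X^\varepsilon_{i,r}}e_z+\frac{\gamma}{2\pi|\ln\varepsilon|}\sum_{j\neq i}\frac{(X_i^\varepsilon-X_j^\varepsilon)^\perp}{|X_i^\varepsilon-X_j^\varepsilon|^2}$,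 $X_i^\varepsilon(0)=X^\varepsilon_{i,0}$. $(\tilde Y_i)_i$ solves $\frac{d}{dt}\tilde Y_i=\frac{\gamma}{2\pi}\sum_{j\ne i}\frac{(\tilde Y_i-\tilde Y_j)^\perp}{|\tilde Y_i-\tilde Y_j|^2}-\frac{\gamma}{4\pi(r^* )^2}\tilde Y_{i,r}e_z$, $\tilde Y_i(0)=Y_{i,0}$, and $\tilde X_i^\varepsilon(t)=X^*+\frac{\gamma}{4\pi r^*}te_z+\frac{1}{\sqrt{|\ln\varepsilon|}}\tilde Y_i(t)$. *)

theory Defs
  imports "HOL-Analysis.Analysis"
begin

text \<open>Points of the half-plane are pairs (z, r) :: real \<times> real; fst = axial z, snd = radial r.\<close>

definition perp :: "real \<times> real \<Rightarrow> real \<times> real" where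
  "perp a = (- snd a, fst a)"

definition ez :: "real \<times> real" where "ez = (1, 0)"

definition lnabs :: "real \<Rightarrow> real" where "lnabs \<epsilon> = \<bar>ln \<epsilon>\<bar>"

definition velX :: "nat \<Rightarrow> real \<Rightarrow> real \<Rightarrow> (nat \<Rightarrow> real \<times> real) \<Rightarrow> nat \<Rightarrow> real \<times> real" where
  "velX N \<gamma> \<epsilon> P i =
     (\<gamma> / (4 * pi * snd (P i))) *\<^sub>R ez
     + (\<gamma> / (2 * pi * lnabs \<epsilon>)) *\<^sub>R
        (\<Sum>j\<in>{1..N} - {i}. (1 / (norm (P i - P j))\<^sup>2) *\<^sub>R perp (P i - P j))"

definition velY :: "nat \<Rightarrow> real \<Rightarrow> real \<Rightarrow> (nat \<Rightarrow> real \<times> real) \<Rightarrow> nat \<Rightarrow> real \<times> real" where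
  "velY N \<gamma> rs P i =
     (\<gamma> / (2 * pi)) *\<^sub>R (\<Sum>j\<in>{1..N} - {i}. (1 / (norm (P i - P j))\<^sup>2) *\<^sub>R perp (P i - P j))
     - (\<gamma> / (4 * pi * rs\<^sup>2) * snd (P i)) *\<^sub>R ez"

definition is_X_sol :: "nat \<Rightarrow> real \<Rightarrow> real \<Rightarrow> (nat \<Rightarrow> real \<times> real) \<Rightarrow> real
    \<Rightarrow> (nat \<Rightarrow> real \<Rightarrow> real \<times> real) \<Rightarrow> bool" where
  "is_X_sol N \<gamma> \<epsilon> X0 T X \<longleftrightarrow>
     (\<forall>i\<in>{1..N}. X i 0 = X0 i) \<and>
     (\<forall>t\<in>{0..T}. \<forall>i\<in>{1..N}. snd (X i t) > 0) \<and>
     (\<forall>t\<in>{0..T}. \<forall>i\<in>{1..N}. \<forall>j\<in>{1..N}. i \<noteq> j \<longrightarrow> X i t \<noteq> X j t) \<and>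
     (\<forall>t\<in>{0..T}. \<forall>i\<in>{1..N}.
        (X i has_vector_derivative velX N \<gamma> \<epsilon> (\<lambda>k. X k t) i) (at t within {0..T}))"

definition is_Y_sol :: "nat \<Rightarrow> real \<Rightarrow> real \<Rightarrow> (nat \<Rightarrow> real \<times> real) \<Rightarrow> real
    \<Rightarrow> (nat \<Rightarrow> real \<Rightarrow> real \<times> real) \<Rightarrow> bool" where
  "is_Y_sol N \<gamma> rs Y0 T Y \<longleftrightarrow>
     (\<forall>i\<in>{1..N}. Y i 0 = Y0 i) \<and>
     (\<forall>t\<in>{0..T}. \<forall>i\<in>{1..N}. \<forall>j\<in>{1..N}. i \<noteq> j \<longrightarrow> Y i t \<noteq> Y j t) \<and>
     (\<forall>t\<in>{0..T}. \<forall>i\<in>{1..N}.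
        (Y i has_vector_derivative velY N \<gamma> rs (\<lambda>k. Y k t) i) (at t within {0..T}))"

definition X0eps :: "real \<times> real \<Rightarrow> (nat \<Rightarrow> real \<times> real) \<Rightarrow> real \<Rightarrow> nat \<Rightarrow> real \<times> real" where
  "X0eps Xs Y0 \<epsilon> i = Xs + (1 / sqrt (lnabs \<epsilon>)) *\<^sub>R Y0 i"

definition Xtilde :: "real \<Rightarrow> real \<times> real \<Rightarrow> real \<Rightarrow> (nat \<Rightarrow> real \<Rightarrow> real \<times> real) \<Rightarrow> nat \<Rightarrow> real \<Rightarrow> real \<times> real" where
  "Xtilde \<gamma> Xs \<epsilon> Y i t = Xs + (\<gamma> / (4 * pi * snd Xs) * t) *\<^sub>R ez + (1 / sqrt (lnabs \<epsilon>)) *\<^sub>R Y i t"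

definition regionA :: "real \<Rightarrow> real \<Rightarrow> real \<Rightarrow> real \<Rightarrow> real \<Rightarrow> (real \<times> real) set" where
  "regionA zs \<epsilon> r0 d h = {p. \<bar>snd p - r0\<bar> \<le> d / sqrt (lnabs \<epsilon>) \<and> \<bar>fst p - zs\<bar> \<le> h}"

definition d0 :: "nat \<Rightarrow> (nat \<Rightarrow> real \<times> real) \<Rightarrow> real" where
  "d0 N Y0 = (1/4) * Min {\<bar>snd (Y0 j) - snd (Y0 k)\<bar> | j k. j \<in> {1..N} \<and> k \<in> {1..N} \<and> j \<noteq> k}"

end

theory Submission
  imports Defs
begin


lemma deriv_bound_open:
  fixes f :: "real \<Rightarrow> 'a::real_inner"
  assumes ab: "a \<le> b" and cf: "continuous_on {a..b} f"
    and df: "\<And>x. a < x \<Longrightarrow> x < b \<Longrightarrow> (f has_vector_derivative f' x) (at x)"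
    and bd: "\<And>x. a < x \<Longrightarrow> x < b \<Longrightarrow> norm (f' x) \<le> B"
  shows "norm (f b - f a) \<le> B * (b - a)"
proof (cases "a = b")
  case True then show ?thesis by simp
next
  case False
  then have "a < b" using ab by simp
  from mvt_general[OF this cf, of "\<lambda>x h. h *\<^sub>R f' x"] df
  obtain x where x: "x \<in> {a<..<b}" "norm (f b - f a) \<le> norm ((b - a) *\<^sub>R f' x)"
    unfolding has_vector_derivative_def by blast
  have "norm ((b - a) *\<^sub>R f' x) = (b - a) * norm (f' x)" using ab by simp
  also have "\<dots> \<le> (b - a) * B" using bd[of x] x(1) ab by (intro mult_left_mono) auto
  finally show ?thesis using x(2) by (simp add: mult.commute)
qed

lemma cont_from_deriv:
  assumes "\<And>s. s \<in> S \<Longrightarrow> (f has_vector_derivative f' s) (at s within S)"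
  shows "continuous_on S f"
  using assms has_vector_derivative_continuous continuous_on_eq_continuous_within by blast

lemma deriv_bound:
  fixes f :: "real \<Rightarrow> 'a::real_inner"
  assumes df: "\<And>s. s \<in> {0..T} \<Longrightarrow> (f has_vector_derivative f' s) (at s within {0..T})"
    and bd: "\<And>s. s \<in> {0..T} \<Longrightarrow> norm (f' s) \<le> B"
    and t: "t \<in> {0..T}"
  shows "norm (f t - f 0) \<le> B * t"
proof -
  have c: "continuous_on {0..T} f" using cont_from_deriv df by blast
  have "norm (f t - f 0) \<le> B * (t - 0)"
  proof (rule deriv_bound_open)
    show "continuous_on {0..t} f" using c t by (auto intro: continuous_on_subset)
    fix x assume x: "0 < x" "x < t"
    then have "(f has_vector_derivative f' x) (at x within {0<..<T})"
      using df[of x] t by (intro has_vector_derivative_within_subset[OF df]) auto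
    then show "(f has_vector_derivative f' x) (at x)"
      using x t by (subst (asm) has_vector_derivative_within_open) auto
    show "norm (f' x) \<le> B" using bd x t by auto
  qed (use t in auto)
  then show ?thesis by simp
qed


lemma picard:
  fixes F :: "(nat \<Rightarrow> real \<times> real) \<Rightarrow> nat \<Rightarrow> real \<times> real" and P0 :: "nat \<Rightarrow> real \<times> real"
  assumes T: "T > 0" and Lc: "Lc \<ge> 0" and M: "M \<ge> 0" and rho: "\<rho> \<ge> 0"
  and G: "G = {P. \<forall>i\<in>{1..N}. \<bar>snd (P i) - snd (P0 i)\<bar> \<le> \<rho>}"
  and bnd: "\<And>P i. P \<in> G \<Longrightarrow> i \<in> {1..N} \<Longrightarrow> norm (F P i) \<le> M"
  and rad: "\<And>P i. P \<in> G \<Longrightarrow> i \<in> {1..N} \<Longrightarrow> T * \<bar>snd (F P i)\<bar> \<le> \<rho>"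
  and lip: "\<And>P Q i. P \<in> G \<Longrightarrow> Q \<in> G \<Longrightarrow> i \<in> {1..N} \<Longrightarrow>
              norm (F P i - F Q i) \<le> Lc * (\<Sum>j\<in>{1..N}. norm (P j - Q j))"
  and TL: "T * Lc * N \<le> 1/2"
  shows "\<exists>p. (\<forall>i\<in>{1..N}. p i 0 = P0 i) \<and> (\<forall>t\<in>{0..T}. (\<lambda>k. p k t) \<in> G) \<and>
     (\<forall>t\<in>{0..T}. \<forall>i\<in>{1..N}. (p i has_vector_derivative F (\<lambda>k. p k t) i) (at t within {0..T}))"
proof -
  define Inv where "Inv p \<longleftrightarrow> (\<forall>i\<in>{1..N}. continuous_on {0..T} (p i)) \<and> (\<forall>t\<in>{0..T}. (\<lambda>k. p k t) \<in> G)"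
    for p :: "nat \<Rightarrow> real \<Rightarrow> real \<times> real"
  have contF: "continuous_on {0..T} (\<lambda>s. F (\<lambda>k. p k s) i)" if ip: "Inv p" and i: "i \<in> {1..N}" for p i
    unfolding continuous_on_iff
  proof (intro ballI allI impI)
    fix x e assume x: "x \<in> {0..T}" and e: "(0::real) < e"
    define \<phi> where "\<phi> s = (\<Sum>j\<in>{1..N}. norm (p j s - p j x))" for s
    have "continuous_on {0..T} \<phi>" unfolding \<phi>_def using ip unfolding Inv_def
      by (intro continuous_intros) auto
    then obtain d where d: "d > 0" "\<And>s. s \<in> {0..T} \<Longrightarrow> dist s x < d \<Longrightarrow> dist (\<phi> s) (\<phi> x) < e / (Lc + 1)"
      using x e Lc unfolding continuous_on_iff by (metis add_nonneg_pos divide_pos_pos zero_less_one)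
    show "\<exists>d>0. \<forall>s\<in>{0..T}. dist s x < d \<longrightarrow> dist (F (\<lambda>k. p k s) i) (F (\<lambda>k. p k x) i) < e"
    proof (intro exI[of _ d] conjI ballI impI)
      fix s assume s: "s \<in> {0..T}" "dist s x < d"
      have "\<phi> x = 0" unfolding \<phi>_def by simp
      moreover have "\<phi> s \<ge> 0" unfolding \<phi>_def by (intro sum_nonneg) auto
      ultimately have ph: "\<phi> s < e / (Lc + 1)" using d(2)[OF s] by (simp add: dist_real_def)
      have "dist (F (\<lambda>k. p k s) i) (F (\<lambda>k. p k x) i) \<le> Lc * \<phi> s"
        unfolding dist_norm \<phi>_def using lip[of "\<lambda>k. p k s" "\<lambda>k. p k x" i] ip s x i unfolding Inv_def by auto
      also have "\<dots> \<le> (Lc + 1) * \<phi> s" using \<open>\<phi> s \<ge> 0\<close> by (simp add: mult_right_mono)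
      also have "\<dots> < e" using ph Lc by (simp add: field_simps)
      finally show "dist (F (\<lambda>k. p k s) i) (F (\<lambda>k. p k x) i) < e" .
    qed (use d in auto)
  qed
  define it where "it p = (\<lambda>i t. P0 i + integral {0..t} (\<lambda>s. F (\<lambda>k. p k s) i))"
    for p :: "nat \<Rightarrow> real \<Rightarrow> real \<times> real"
  have derit: "(it p i has_vector_derivative F (\<lambda>k. p k t) i) (at t within {0..T})"
    if "Inv p" "i \<in> {1..N}" "t \<in> {0..T}" for p i t
    unfolding it_def using integral_has_vector_derivative[OF contF[OF that(1,2)] that(3)]
    by (intro derivative_eq_intros) auto
  have it0: "it p i 0 = P0 i" for p i unfolding it_def by simp
  have invit: "Inv (it p)" if ip: "Inv p" for p
    unfolding Inv_def
  proof (intro conjI ballI)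
    fix i assume i: "i \<in> {1..N}"
    show "continuous_on {0..T} (it p i)" by (rule cont_from_deriv[OF derit[OF ip i]])
  next
    fix t assume t: "t \<in> {0..T}"
    show "(\<lambda>k. it p k t) \<in> G" unfolding G
    proof (intro CollectI ballI)
      fix i assume i: "i \<in> {1..N}"
      have d: "((\<lambda>s. snd (it p i s)) has_vector_derivative snd (F (\<lambda>k. p k s) i)) (at s within {0..T})"
        if "s \<in> {0..T}" for s
        by (rule bounded_linear.has_vector_derivative[OF bounded_linear_snd derit[OF ip i that]])
      have "norm (snd (it p i t) - snd (it p i 0)) \<le> (\<rho> / T) * t"
      proof (rule deriv_bound[OF d _ t])
        fix s assume s: "s \<in> {0..T}"
        have "T * \<bar>snd (F (\<lambda>k. p k s) i)\<bar> \<le> \<rho>" using rad ip s i unfolding Inv_def by auto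
        then show "norm (snd (F (\<lambda>k. p k s) i)) \<le> \<rho> / T" using T by (simp add: field_simps)
      qed
      also have "\<dots> \<le> (\<rho> / T) * T" using t rho T by (intro mult_left_mono) auto
      finally show "\<bar>snd (it p i t) - snd (P0 i)\<bar> \<le> \<rho>" using T it0 by simp
    qed
  qed
  have contr: "norm (it p i t - it q i t) \<le> Lc * N * e * t"
    if ip: "Inv p" and iq: "Inv q" and e: "\<forall>i\<in>{1..N}. \<forall>t\<in>{0..T}. norm (p i t - q i t) \<le> e"
      and i: "i \<in> {1..N}" and t: "t \<in> {0..T}" for p q e i t
  proof -
    have d: "((\<lambda>s. it p i s - it q i s) has_vector_derivative
             (F (\<lambda>k. p k s) i - F (\<lambda>k. q k s) i)) (at s within {0..T})" if "s \<in> {0..T}" for s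
      using derit[OF ip i that] derit[OF iq i that] by (rule has_vector_derivative_diff)
    have "norm ((it p i t - it q i t) - (it p i 0 - it q i 0)) \<le> (Lc * N * e) * t"
    proof (rule deriv_bound[OF d _ t])
      fix s assume s: "s \<in> {0..T}"
      have "norm (F (\<lambda>k. p k s) i - F (\<lambda>k. q k s) i) \<le> Lc * (\<Sum>j\<in>{1..N}. norm (p j s - q j s))"
        using lip ip iq s i unfolding Inv_def by auto
      also have "\<dots> \<le> Lc * (\<Sum>j\<in>{1..N}. e)" using e s by (intro mult_left_mono sum_mono Lc) auto
      finally show "norm (F (\<lambda>k. p k s) i - F (\<lambda>k. q k s) i) \<le> Lc * N * e" by simp
    qed
    then show ?thesis using it0 by simp
  qed
  define ps where "ps n = (it ^^ n) (\<lambda>i t. P0 i)" for n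
  have ps_Suc: "ps (Suc n) = it (ps n)" for n unfolding ps_def by simp
  have inv0: "Inv (\<lambda>i t. P0 i)" unfolding Inv_def G using rho by auto
  have invps: "Inv (ps n)" for n
    by (induction n) (use inv0 invit in \<open>auto simp: ps_Suc, simp add: ps_def\<close>)
  define e0 where "e0 = M * T"
  have e0: "e0 \<ge> 0" using M T e0_def by simp
  have step: "\<forall>i\<in>{1..N}. \<forall>t\<in>{0..T}. norm (ps (Suc n) i t - ps n i t) \<le> e0 * (1/2)^n" for n
  proof (induction n)
    case 0
    show ?case
    proof (intro ballI)
      fix i t assume i: "i \<in> {1..N}" and t: "t \<in> {0..T}"
      have "norm (it (ps 0) i t - it (ps 0) i 0) \<le> M * t"
        by (rule deriv_bound[OF derit[OF invps i] _ t]) (use bnd invps i in \<open>auto simp: Inv_def\<close>)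
      also have "\<dots> \<le> e0" unfolding e0_def using M t by (intro mult_left_mono) auto
      finally show "norm (ps (Suc 0) i t - ps 0 i t) \<le> e0 * (1/2)^0"
        using it0 by (simp add: ps_Suc) (simp add: ps_def)
    qed
  next
    case (Suc n)
    show ?case
    proof (intro ballI)
      fix i t assume i: "i \<in> {1..N}" and t: "t \<in> {0..T}"
      have "norm (it (ps (Suc n)) i t - it (ps n) i t) \<le> Lc * N * (e0 * (1/2)^n) * t"
        by (rule contr[OF invps invps _ i t]) (use Suc in \<open>simp add: ps_Suc\<close>)
      then have "norm (ps (Suc (Suc n)) i t - ps (Suc n) i t) \<le> Lc * N * (e0 * (1/2)^n) * t"
        by (simp only: ps_Suc)
      also have "\<dots> \<le> (T * Lc * N) * (e0 * (1/2)^n)"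
      proof -
        have "Lc * N * t \<le> Lc * N * T" using t Lc by (intro mult_left_mono) auto
        then have "Lc * N * t * (e0 * (1/2)^n) \<le> Lc * N * T * (e0 * (1/2)^n)"
          using e0 by (intro mult_right_mono) auto
        then show ?thesis by (simp add: ac_simps)
      qed
      also have "\<dots> \<le> (1/2) * (e0 * (1/2)^n)" using TL e0 by (intro mult_right_mono) auto
      finally show "norm (ps (Suc (Suc n)) i t - ps (Suc n) i t) \<le> e0 * (1/2)^Suc n" by simp
    qed
  qed
  have cauchy: "norm (ps (n + k) i t - ps n i t) \<le> 2 * e0 * (1/2)^n - 2 * e0 * (1/2)^(n+k)"
    if i: "i \<in> {1..N}" and t: "t \<in> {0..T}" for n k i t
  proof (induction k)
    case 0 then show ?case by simp
  next
    case (Suc k)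
    have "norm (ps (n + Suc k) i t - ps n i t) \<le> norm (ps (Suc (n + k)) i t - ps (n+k) i t) + norm (ps (n + k) i t - ps n i t)"
    proof -
      have "ps (n + Suc k) i t - ps n i t = (ps (Suc (n + k)) i t - ps (n+k) i t) + (ps (n + k) i t - ps n i t)"
        by simp
      then show ?thesis by (metis norm_triangle_ineq)
    qed
    also have "\<dots> \<le> e0 * (1/2)^(n+k) + (2 * e0 * (1/2)^n - 2 * e0 * (1/2)^(n+k))"
      using step i t Suc by (intro add_mono) auto
    also have "\<dots> = 2 * e0 * (1/2)^n - 2 * e0 * (1/2)^(n + Suc k)" by simp
    finally show ?case .
  qed
  have cb: "norm (ps m i t - ps n i t) \<le> 2 * e0 * (1/2)^n" if "n \<le> m" "i \<in> {1..N}" "t \<in> {0..T}" for m n i t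
  proof -
    have "0 \<le> 2 * e0 * (1/2::real)^m" using e0 by simp
    then show ?thesis using cauchy[OF that(2,3), of n "m - n"] that(1) by simp
  qed
  have lim0: "(\<lambda>n. 2 * e0 * (1/2::real)^n) \<longlonglongrightarrow> 0"
    by (intro tendsto_mult_right_zero LIMSEQ_power_zero) auto
  have evsmall: "\<exists>n0. \<forall>n\<ge>n0. 2 * e0 * (1/2::real)^n < e" if "e > 0" for e
    using order_tendstoD(2)[OF lim0 that] unfolding eventually_sequentially by blast
  have conv: "convergent (\<lambda>n. ps n i t)" if i: "i \<in> {1..N}" and t: "t \<in> {0..T}" for i t
  proof -
    have "Cauchy (\<lambda>n. ps n i t)"
      unfolding Cauchy_def
    proof (intro allI impI)
      fix e :: real assume "e > 0"
      then obtain n0 where n0: "\<forall>n\<ge>n0. 2 * e0 * (1/2::real)^n < e" using evsmall by blast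
      show "\<exists>M. \<forall>m\<ge>M. \<forall>n\<ge>M. dist (ps m i t) (ps n i t) < e"
      proof (intro exI[of _ n0] allI impI)
        fix m n assume mn: "n0 \<le> m" "n0 \<le> n"
        show "dist (ps m i t) (ps n i t) < e"
        proof (cases "n \<le> m")
          case True
          have "2 * e0 * (1/2::real)^n < e" using n0 mn by blast
          then show ?thesis using cb[OF True i t] unfolding dist_norm by linarith
        next
          case False
          have "2 * e0 * (1/2::real)^m < e" using n0 mn by blast
          moreover have "norm (ps n i t - ps m i t) \<le> 2 * e0 * (1/2)^m" using False cb[of m n i t] i t by simp
          ultimately show ?thesis unfolding dist_norm by (simp add: norm_minus_commute)
        qed
      qed
    qed
    then show ?thesis using Cauchy_convergent by blast
  qed
  define p where "p i t = lim (\<lambda>n. ps n i t)" for i t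
  have lim: "(\<lambda>n. ps n i t) \<longlonglongrightarrow> p i t" if "i \<in> {1..N}" "t \<in> {0..T}" for i t
    using conv[OF that] unfolding p_def by (simp add: convergent_LIMSEQ_iff)
  have ub: "norm (p i t - ps n i t) \<le> 2 * e0 * (1/2)^n" if i: "i \<in> {1..N}" and t: "t \<in> {0..T}" for i t n
  proof (rule tendsto_upperbound)
    show "((\<lambda>k. norm (ps (k + n) i t - ps n i t)) \<longlongrightarrow> norm (p i t - ps n i t)) sequentially"
      by (intro tendsto_intros LIMSEQ_ignore_initial_segment lim i t)
    show "\<forall>\<^sub>F k in sequentially. norm (ps (k + n) i t - ps n i t) \<le> 2 * e0 * (1/2)^n"
      using cb i t by (intro always_eventually) auto
  qed auto
  have invp: "Inv p" unfolding Inv_def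
  proof (intro conjI ballI)
    fix i assume i: "i \<in> {1..N}"
    show "continuous_on {0..T} (p i)"
    proof (rule uniform_limit_theorem[where f="\<lambda>n. ps n i" and F=sequentially])
      show "\<forall>\<^sub>F n in sequentially. continuous_on {0..T} (ps n i)"
        using invps i unfolding Inv_def by auto
      show "uniform_limit {0..T} (\<lambda>n. ps n i) (p i) sequentially"
      proof (rule uniform_limitI)
        fix e :: real assume "e > 0"
        then obtain n0 where n0: "\<forall>n\<ge>n0. 2 * e0 * (1/2::real)^n < e" using evsmall by blast
        show "\<forall>\<^sub>F n in sequentially. \<forall>x\<in>{0..T}. dist (ps n i x) (p i x) < e"
          unfolding eventually_sequentially
        proof (intro exI[of _ n0] allI impI ballI)
          fix n x assume n: "n0 \<le> n" and x: "x \<in> {0..T}"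
          have "norm (p i x - ps n i x) \<le> 2 * e0 * (1/2)^n" using ub i x by blast
          moreover have "2 * e0 * (1/2::real)^n < e" using n0 n by blast
          moreover have "dist (ps n i x) (p i x) = norm (p i x - ps n i x)" by (simp add: dist_norm norm_minus_commute)
          ultimately show "dist (ps n i x) (p i x) < e" by linarith
        qed
      qed
    qed auto
  next
    fix t assume t: "t \<in> {0..T}"
    show "(\<lambda>k. p k t) \<in> G" unfolding G
    proof (intro CollectI ballI)
      fix i assume i: "i \<in> {1..N}"
      show "\<bar>snd (p i t) - snd (P0 i)\<bar> \<le> \<rho>"
      proof (rule tendsto_upperbound)
        show "((\<lambda>n. \<bar>snd (ps n i t) - snd (P0 i)\<bar>) \<longlongrightarrow> \<bar>snd (p i t) - snd (P0 i)\<bar>) sequentially"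
          by (intro tendsto_intros lim i t)
        show "\<forall>\<^sub>F n in sequentially. \<bar>snd (ps n i t) - snd (P0 i)\<bar> \<le> \<rho>"
          using invps i t unfolding Inv_def G by (intro always_eventually) auto
      qed auto
    qed
  qed
  have inteq: "p i t = it p i t" if i: "i \<in> {1..N}" and t: "t \<in> {0..T}" for i t
  proof -
    have "(\<lambda>n. ps (Suc n) i t) \<longlonglongrightarrow> p i t" using lim[OF i t] by (rule LIMSEQ_Suc)
    moreover have "(\<lambda>n. ps (Suc n) i t) \<longlonglongrightarrow> it p i t"
    proof -
      have "(\<lambda>n. ps (Suc n) i t - it p i t) \<longlonglongrightarrow> 0"
      proof (rule Lim_null_comparison)
        show "\<forall>\<^sub>F n in sequentially. norm (ps (Suc n) i t - it p i t) \<le> Lc * N * (2 * e0 * (1/2)^n) * t"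
        proof (intro always_eventually allI)
          fix n
          have "norm (it (ps n) i t - it p i t) \<le> Lc * N * (2 * e0 * (1/2)^n) * t"
            by (rule contr[OF invps invp _ i t]) (use ub in \<open>auto simp: norm_minus_commute\<close>)
          then show "norm (ps (Suc n) i t - it p i t) \<le> Lc * N * (2 * e0 * (1/2)^n) * t"
            by (simp add: ps_Suc)
        qed
        show "(\<lambda>n. Lc * N * (2 * e0 * (1/2)^n) * t) \<longlonglongrightarrow> 0"
          by (rule tendsto_mult_left_zero[OF tendsto_mult_right_zero[OF lim0]])
      qed
      then show ?thesis by (simp add: LIM_zero_iff)
    qed
    ultimately show ?thesis by (rule LIMSEQ_unique)
  qed
  show ?thesis
  proof (intro exI[of _ p] conjI ballI)
    fix i assume i: "i \<in> {1..N}"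
    show "p i 0 = P0 i" using inteq[OF i, of 0] T it0 by simp
  next
    fix t assume t: "t \<in> {0..T}"
    show "(\<lambda>k. p k t) \<in> G" using invp t unfolding Inv_def by auto
    fix i assume i: "i \<in> {1..N}"
    show "(p i has_vector_derivative F (\<lambda>k. p k t) i) (at t within {0..T})"
      by (rule has_vector_derivative_transform[OF t _ derit[OF invp i t]]) (use inteq i in auto)
  qed
qed



lemma barrier:
  fixes X :: "nat \<Rightarrow> real \<Rightarrow> real \<times> real" and F :: "(nat \<Rightarrow> real \<times> real) \<Rightarrow> nat \<Rightarrow> real \<times> real"
  assumes T: "T > 0" and rho: "\<rho> > 0"
  and X0: "\<forall>i\<in>{1..N}. X i 0 = P0 i"
  and dX: "\<forall>t\<in>{0..T}. \<forall>i\<in>{1..N}. (X i has_vector_derivative F (\<lambda>k. X k t) i) (at t within {0..T})"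
  and rad: "\<And>P i. (\<forall>j\<in>{1..N}. \<bar>snd (P j) - snd (P0 j)\<bar> \<le> \<rho>) \<Longrightarrow> i \<in> {1..N} \<Longrightarrow> T * \<bar>snd (F P i)\<bar> \<le> \<rho>/2"
  shows "\<forall>t\<in>{0..T}. \<forall>i\<in>{1..N}. \<bar>snd (X i t) - snd (P0 i)\<bar> \<le> \<rho>/2"
proof -
  define g where "g i t = snd (X i t) - snd (P0 i)" for i t
  have dg: "((\<lambda>t. g i t) has_vector_derivative snd (F (\<lambda>k. X k t) i)) (at t within {0..T})"
    if "t \<in> {0..T}" "i \<in> {1..N}" for t i
  proof -
    have "(X i has_vector_derivative F (\<lambda>k. X k t) i) (at t within {0..T})" using dX that by auto
    from bounded_linear.has_vector_derivative[OF bounded_linear_snd this]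
    have "((\<lambda>t. snd (X i t)) has_vector_derivative snd (F (\<lambda>k. X k t) i)) (at t within {0..T})" by simp
    from has_vector_derivative_diff[OF this has_vector_derivative_const[of "snd (P0 i)"]]
    show ?thesis unfolding g_def by simp
  qed
  have cg: "continuous_on {0..T} (g i)" if "i \<in> {1..N}" for i
    by (rule cont_from_deriv[OF dg[OF _ that]])
  have g0: "g i 0 = 0" if "i \<in> {1..N}" for i using X0 that unfolding g_def by simp
  have bnd: "norm (snd (F (\<lambda>k. X k t) i)) \<le> \<rho> / (2 * T)"
    if "\<forall>j\<in>{1..N}. \<bar>g j t\<bar> \<le> \<rho>" "i \<in> {1..N}" for t i
  proof -
    have "T * \<bar>snd (F (\<lambda>k. X k t) i)\<bar> \<le> \<rho>/2" using rad[of "\<lambda>k. X k t" i] that unfolding g_def by auto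
    then show ?thesis using T by (simp add: field_simps)
  qed
  define Z where "Z = (\<Union>i\<in>{1..N}. {t \<in> {0..T}. \<rho> \<le> \<bar>g i t\<bar>})"
  have Zempty: "Z = {}"
  proof (rule ccontr)
    assume ne: "Z \<noteq> {}"
    have "closed Z" unfolding Z_def
      using cg by (intro closed_UN finite_atLeastAtMost ballI continuous_on_closed_Collect_le continuous_on_const continuous_on_rabs closed_atLeastAtMost) auto
    moreover have "bdd_below Z" unfolding Z_def by (auto intro!: bdd_belowI[of _ 0])
    ultimately have t1Z: "Inf Z \<in> Z" using ne closed_contains_Inf by blast
    define t1 where "t1 = Inf Z"
    have below: "\<bar>g j s\<bar> < \<rho>" if "s \<in> {0..T}" "s < t1" "j \<in> {1..N}" for s j
    proof (rule ccontr)
      assume "\<not> ?thesis"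
      then have "\<rho> \<le> \<bar>g j s\<bar>" by simp
      then have "s \<in> Z" unfolding Z_def using that by blast
      then have "t1 \<le> s" unfolding t1_def using \<open>bdd_below Z\<close> by (rule cInf_lower)
      then show False using that by simp
    qed
    from t1Z obtain i where i: "i \<in> {1..N}" and t1: "t1 \<in> {0..T}" "\<rho> \<le> \<bar>g i t1\<bar>"
      unfolding Z_def t1_def by auto
    have "norm (g i t1 - g i 0) \<le> \<rho> / (2 * T) * (t1 - 0)"
    proof (rule deriv_bound_open)
      show "0 \<le> t1" using t1 by simp
      show "continuous_on {0..t1} (g i)" using cg[OF i] t1 by (auto intro: continuous_on_subset)
      fix x assume x: "0 < x" "x < t1"
      have "((\<lambda>t. g i t) has_vector_derivative snd (F (\<lambda>k. X k x) i)) (at x within {0<..<T})"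
        using x t1 by (intro has_vector_derivative_within_subset[OF dg[OF _ i]]) auto
      then show "(g i has_vector_derivative snd (F (\<lambda>k. X k x) i)) (at x)"
        using x t1 by (subst (asm) has_vector_derivative_within_open) auto
      show "norm (snd (F (\<lambda>k. X k x) i)) \<le> \<rho> / (2 * T)"
        using bnd[of x i] below[of x] x t1 i by fastforce
    qed
    also have "\<dots> \<le> \<rho> / (2 * T) * T" using t1 rho T by (intro mult_left_mono) auto
    also have "\<dots> = \<rho> / 2" using T by simp
    finally show False using t1 g0[OF i] rho by simp
  qed
  show ?thesis
  proof (intro ballI)
    fix t i assume t: "t \<in> {0..T}" and i: "i \<in> {1..N}"
    have inG: "\<forall>j\<in>{1..N}. \<bar>g j s\<bar> \<le> \<rho>" if "s \<in> {0..T}" for s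
      using Zempty that unfolding Z_def by force
    have "norm (g i t - g i 0) \<le> \<rho> / (2 * T) * t"
      by (rule deriv_bound[OF dg[OF _ i] _ t]) (use bnd inG i in auto)
    also have "\<dots> \<le> \<rho> / (2 * T) * T" using t rho T by (intro mult_left_mono) auto
    finally show "\<bar>snd (X i t) - snd (P0 i)\<bar> \<le> \<rho>/2" using g0[OF i] T unfolding g_def by simp
  qed
qed



definition gg :: "real \<times> real \<Rightarrow> real \<times> real" where
  "gg d = (1 / (norm d)\<^sup>2) *\<^sub>R perp d"

definition Isum :: "nat \<Rightarrow> (nat \<Rightarrow> real \<times> real) \<Rightarrow> nat \<Rightarrow> real \<times> real" where
  "Isum N P i = (\<Sum>j\<in>{1..N} - {i}. gg (P i - P j))"

lemma velX_eq: "velX N \<gamma> \<epsilon> P i = (\<gamma> / (4 * pi * snd (P i))) *\<^sub>R ez + (\<gamma> / (2 * pi * lnabs \<epsilon>)) *\<^sub>R Isum N P i"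
  unfolding velX_def Isum_def gg_def by simp

lemma velY_eq: "velY N \<gamma> rs P i = (\<gamma> / (2 * pi)) *\<^sub>R Isum N P i - (\<gamma> / (4 * pi * rs\<^sup>2) * snd (P i)) *\<^sub>R ez"
  unfolding velY_def Isum_def gg_def by simp

lemma norm_perp: "norm (perp v) = norm v"
  unfolding perp_def by (cases v) (simp add: norm_Pair add.commute)

lemma perp_diff: "perp (a - b) = perp a - perp b"
  unfolding perp_def by simp

lemma perp_scale: "perp (c *\<^sub>R a) = c *\<^sub>R perp a"
  unfolding perp_def by simp

lemma norm_ez: "norm ez = 1" unfolding ez_def by simp

lemma norm_gg: "norm (gg d) = 1 / norm d"
  unfolding gg_def by (simp add: norm_perp power2_eq_square)

lemma gg_scale: "c > 0 \<Longrightarrow> gg (c *\<^sub>R d) = (1 / c) *\<^sub>R gg d"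
  unfolding gg_def by (simp add: perp_scale power2_eq_square field_simps)

lemma gg_lip_eq:
  assumes "a \<noteq> 0" "b \<noteq> 0"
  shows "norm (gg a - gg b) = norm (a - b) / (norm a * norm b)"
proof -
  have "gg a - gg b = perp ((1 / (norm a)\<^sup>2) *\<^sub>R a - (1 / (norm b)\<^sup>2) *\<^sub>R b)"
    unfolding gg_def by (simp add: perp_diff perp_scale)
  then have e: "norm (gg a - gg b) = norm ((1 / (norm a)\<^sup>2) *\<^sub>R a - (1 / (norm b)\<^sup>2) *\<^sub>R b)"
    by (simp add: norm_perp)
  have na: "norm a > 0" and nb: "norm b > 0" using assms by auto
  have "(norm ((1 / (norm a)\<^sup>2) *\<^sub>R a - (1 / (norm b)\<^sup>2) *\<^sub>R b))\<^sup>2 = (norm (a - b) / (norm a * norm b))\<^sup>2"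
  proof -
    have "(norm ((1 / (norm a)\<^sup>2) *\<^sub>R a - (1 / (norm b)\<^sup>2) *\<^sub>R b))\<^sup>2
        = 1 / (norm a)\<^sup>2 - 2 * inner a b / ((norm a)\<^sup>2 * (norm b)\<^sup>2) + 1 / (norm b)\<^sup>2"
    proof -
      define \<alpha> where "\<alpha> = 1 / (norm a)\<^sup>2"
      define \<beta> where "\<beta> = 1 / (norm b)\<^sup>2"
      have "(norm (\<alpha> *\<^sub>R a - \<beta> *\<^sub>R b))\<^sup>2 = \<alpha>\<^sup>2 * inner a a - 2 * \<alpha> * \<beta> * inner a b + \<beta>\<^sup>2 * inner b b"
        unfolding power2_norm_eq_inner by (simp add: inner_diff_left inner_diff_right inner_commute algebra_simps power2_eq_square)
      also have "\<dots> = \<alpha>\<^sup>2 * (norm a)\<^sup>2 - 2 * \<alpha> * \<beta> * inner a b + \<beta>\<^sup>2 * (norm b)\<^sup>2"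
        by (simp add: power2_norm_eq_inner)
      also have "\<dots> = 1 / (norm a)\<^sup>2 - 2 * inner a b / ((norm a)\<^sup>2 * (norm b)\<^sup>2) + 1 / (norm b)\<^sup>2"
        unfolding \<alpha>_def \<beta>_def using na nb by (simp add: field_simps power2_eq_square)
      finally show ?thesis unfolding \<alpha>_def \<beta>_def .
    qed
    also have "\<dots> = ((norm a)\<^sup>2 - 2 * inner a b + (norm b)\<^sup>2) / ((norm a)\<^sup>2 * (norm b)\<^sup>2)"
      using na nb by (simp add: field_simps power2_eq_square)
    also have "\<dots> = (norm (a - b))\<^sup>2 / ((norm a)\<^sup>2 * (norm b)\<^sup>2)"
      by (simp add: power2_norm_eq_inner inner_diff_left inner_diff_right inner_commute)
    also have "\<dots> = (norm (a - b) / (norm a * norm b))\<^sup>2" by (simp add: power_divide power_mult_distrib)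
    finally show ?thesis .
  qed
  then have "norm ((1 / (norm a)\<^sup>2) *\<^sub>R a - (1 / (norm b)\<^sup>2) *\<^sub>R b) = norm (a - b) / (norm a * norm b)"
    using na nb by (subst (asm) power2_eq_iff_nonneg) auto
  then show ?thesis using e by simp
qed

lemma norm_snd_le': "\<bar>snd v\<bar> \<le> norm (v :: real \<times> real)"
  by (cases v) (simp add: norm_Pair real_sqrt_ge_abs2)

lemma norm_fst_le': "\<bar>fst v\<bar> \<le> norm (v :: real \<times> real)"
  by (cases v) (simp add: norm_Pair real_sqrt_ge_abs1)



lemma isum_bound:
  assumes s: "s > 0" and sep: "\<And>j. j \<in> {1..N} \<Longrightarrow> j \<noteq> i \<Longrightarrow> s \<le> norm (P i - P j)"
  shows "norm (Isum N P i) \<le> N / s"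
proof -
  have "norm (Isum N P i) \<le> (\<Sum>j\<in>{1..N} - {i}. norm (gg (P i - P j)))"
    unfolding Isum_def by (rule norm_sum)
  also have "\<dots> \<le> (\<Sum>j\<in>{1..N} - {i}. 1 / s)"
  proof (rule sum_mono)
    fix j assume j: "j \<in> {1..N} - {i}"
    have "s \<le> norm (P i - P j)" using sep j by auto
    then show "norm (gg (P i - P j)) \<le> 1 / s" unfolding norm_gg using s by (simp add: frac_le)
  qed
  also have "\<dots> = card ({1..N} - {i}) / s" by simp
  also have "\<dots> \<le> N / s"
  proof -
    have "card ({1..N} - {i}) \<le> card {1..N}" by (rule card_mono) auto
    then show ?thesis using s by (simp add: divide_right_mono)
  qed
  finally show ?thesis .
qed

lemma isum_lip:
  assumes s: "s > 0" and i: "i \<in> {1..N}"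
    and sepP: "\<And>j. j \<in> {1..N} \<Longrightarrow> j \<noteq> i \<Longrightarrow> s \<le> norm (P i - P j)"
    and sepQ: "\<And>j. j \<in> {1..N} \<Longrightarrow> j \<noteq> i \<Longrightarrow> s \<le> norm (Q i - Q j)"
  shows "norm (Isum N P i - Isum N Q i) \<le> ((real N + 1) / s\<^sup>2) * (\<Sum>j\<in>{1..N}. norm (P j - Q j))"
proof -
  define a where "a j = norm (P j - Q j)" for j
  define S where "S = (\<Sum>j\<in>{1..N}. a j)"
  have a0: "a j \<ge> 0" for j unfolding a_def by simp
  have "norm (Isum N P i - Isum N Q i) = norm (\<Sum>j\<in>{1..N} - {i}. gg (P i - P j) - gg (Q i - Q j))"
    unfolding Isum_def by (simp add: sum_subtractf)
  also have "\<dots> \<le> (\<Sum>j\<in>{1..N} - {i}. norm (gg (P i - P j) - gg (Q i - Q j)))"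
    by (rule norm_sum)
  also have "\<dots> \<le> (\<Sum>j\<in>{1..N} - {i}. (a i + a j) / s\<^sup>2)"
  proof (rule sum_mono)
    fix j assume j: "j \<in> {1..N} - {i}"
    have p: "s \<le> norm (P i - P j)" and q: "s \<le> norm (Q i - Q j)" using sepP sepQ j by auto
    then have nz: "P i - P j \<noteq> 0" "Q i - Q j \<noteq> 0" using s by auto
    have "norm (gg (P i - P j) - gg (Q i - Q j)) = norm ((P i - P j) - (Q i - Q j)) / (norm (P i - P j) * norm (Q i - Q j))"
      by (rule gg_lip_eq[OF nz])
    also have "\<dots> \<le> norm ((P i - P j) - (Q i - Q j)) / (s * s)"
    proof -
      have "0 < norm (P i - P j) * norm (Q i - Q j) * (s * s)" using p q s by (intro mult_pos_pos) auto
      moreover have "s * s \<le> norm (P i - P j) * norm (Q i - Q j)" using p q s by (intro mult_mono) auto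
      ultimately show ?thesis using s by (intro divide_left_mono) auto
    qed
    also have "norm ((P i - P j) - (Q i - Q j)) \<le> a i + a j"
    proof -
      have "(P i - P j) - (Q i - Q j) = (P i - Q i) - (P j - Q j)" by simp
      then show ?thesis unfolding a_def by (metis norm_triangle_ineq4)
    qed
    then have "norm ((P i - P j) - (Q i - Q j)) / (s * s) \<le> (a i + a j) / s\<^sup>2"
      using s by (simp add: power2_eq_square divide_right_mono)
    finally show "norm (gg (P i - P j) - gg (Q i - Q j)) \<le> (a i + a j) / s\<^sup>2" .
  qed
  also have "\<dots> = (card ({1..N} - {i}) * a i + (\<Sum>j\<in>{1..N} - {i}. a j)) / s\<^sup>2"
    by (simp add: sum_divide_distrib[symmetric] sum.distrib)
  also have "\<dots> \<le> (N * S + S) / s\<^sup>2"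
  proof -
    have ai: "a i \<le> S" unfolding S_def using i a0 by (intro member_le_sum) auto
    have c: "card ({1..N} - {i}) \<le> N" using card_mono[of "{1..N}" "{1..N} - {i}"] by auto
    have "card ({1..N} - {i}) * a i \<le> N * a i" using c a0 by (intro mult_right_mono) auto
    also have "\<dots> \<le> N * S" using ai by (intro mult_left_mono) auto
    finally have 1: "card ({1..N} - {i}) * a i \<le> N * S" .
    have 2: "(\<Sum>j\<in>{1..N} - {i}. a j) \<le> S" unfolding S_def using a0 by (intro sum_mono2) auto
    show ?thesis using 1 2 s by (intro divide_right_mono) auto
  qed
  also have "\<dots> = ((real N + 1) / s\<^sup>2) * S" by (simp add: field_simps)
  finally show ?thesis unfolding S_def a_def .
qed

lemma isum_scale:
  assumes c: "c > 0" and h: "\<And>j. j \<in> {1..N} \<Longrightarrow> Q i - Q j = c *\<^sub>R (P i - P j)"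
  shows "Isum N Q i = (1 / c) *\<^sub>R Isum N P i"
  unfolding Isum_def scaleR_sum_right
  by (rule sum.cong) (use h gg_scale[OF c] in auto)

lemma sep_radial:
  fixes P :: "nat \<Rightarrow> real \<times> real"
  assumes P: "\<forall>j\<in>{1..N}. \<bar>snd (P j) - b j\<bar> \<le> \<rho>"
    and b: "\<forall>j\<in>{1..N}. \<forall>k\<in>{1..N}. j \<noteq> k \<longrightarrow> 4 * \<rho> \<le> \<bar>b j - b k\<bar>"
    and jk: "j \<in> {1..N}" "k \<in> {1..N}" "j \<noteq> k"
  shows "2 * \<rho> \<le> norm (P j - P k)"
proof -
  have "\<bar>snd (P j - P k)\<bar> \<le> norm (P j - P k)" by (rule norm_snd_le')
  moreover have "4 * \<rho> \<le> \<bar>b j - b k\<bar>" using b jk by auto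
  moreover have "\<bar>snd (P j) - b j\<bar> \<le> \<rho>" "\<bar>snd (P k) - b k\<bar> \<le> \<rho>" using P jk by auto
  ultimately show ?thesis unfolding snd_diff by linarith
qed

lemma d0_props:
  assumes N: "N \<ge> 2" and inj: "inj_on (\<lambda>i. snd (Y0 i)) {1..N}"
  shows "d0 N Y0 > 0" "\<forall>j\<in>{1..N}. \<forall>k\<in>{1..N}. j \<noteq> k \<longrightarrow> 4 * d0 N Y0 \<le> \<bar>snd (Y0 j) - snd (Y0 k)\<bar>"
proof -
  define A where "A = {\<bar>snd (Y0 j) - snd (Y0 k)\<bar> | j k. j \<in> {1..N} \<and> k \<in> {1..N} \<and> j \<noteq> k}"
  have "A \<subseteq> (\<lambda>(j, k). \<bar>snd (Y0 j) - snd (Y0 k)\<bar>) ` ({1..N} \<times> {1..N})" unfolding A_def by auto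
  then have fin: "finite A" by (rule finite_subset) auto
  have "(1::nat) \<in> {1..N}" "(2::nat) \<in> {1..N}" "(1::nat) \<noteq> 2" using N by auto
  then have "\<bar>snd (Y0 1) - snd (Y0 2)\<bar> \<in> A" unfolding A_def
    by (intro CollectI exI[of _ "1::nat"] exI[of _ "2::nat"] conjI refl) auto
  then have ne: "A \<noteq> {}" by blast
  have pos: "x > 0" if "x \<in> A" for x
  proof -
    from that obtain j k where jk: "x = \<bar>snd (Y0 j) - snd (Y0 k)\<bar>" "j \<in> {1..N}" "k \<in> {1..N}" "j \<noteq> k"
      unfolding A_def by blast
    have "snd (Y0 j) \<noteq> snd (Y0 k)" using inj_onD[OF inj, of j k] jk by auto
    then show ?thesis using jk(1) by simp
  qed
  have "Min A \<in> A" using fin ne by (rule Min_in)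
  then have "Min A > 0" by (rule pos)
  then show "d0 N Y0 > 0" unfolding d0_def A_def[symmetric] by simp
  show "\<forall>j\<in>{1..N}. \<forall>k\<in>{1..N}. j \<noteq> k \<longrightarrow> 4 * d0 N Y0 \<le> \<bar>snd (Y0 j) - snd (Y0 k)\<bar>"
  proof (intro ballI impI)
    fix j k assume "j \<in> {1..N}" "k \<in> {1..N}" "j \<noteq> k"
    then have "\<bar>snd (Y0 j) - snd (Y0 k)\<bar> \<in> A" unfolding A_def
      by (intro CollectI exI[of _ j] exI[of _ k] conjI refl) auto
    then have "Min A \<le> \<bar>snd (Y0 j) - snd (Y0 k)\<bar>" using fin by (intro Min_le)
    then show "4 * d0 N Y0 \<le> \<bar>snd (Y0 j) - snd (Y0 k)\<bar>" unfolding d0_def A_def[symmetric] by simp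
  qed
qed



lemma inv_diff_bound:
  fixes a b r :: real
  assumes "r > 0" "a \<ge> r/2" "b \<ge> r/2"
  shows "\<bar>1/a - 1/b\<bar> \<le> 4 / r\<^sup>2 * \<bar>a - b\<bar>"
proof -
  have ap: "a > 0" "b > 0" using assms by auto
  have "\<bar>1/a - 1/b\<bar> = \<bar>a - b\<bar> / (a * b)" using ap by (simp add: field_simps abs_div)
  also have "\<dots> \<le> \<bar>a - b\<bar> / (r/2 * (r/2))"
    using assms ap by (intro divide_left_mono mult_mono mult_pos_pos) auto
  also have "\<dots> = 4 / r\<^sup>2 * \<bar>a - b\<bar>" by (simp add: power2_eq_square field_simps)
  finally show ?thesis .
qed

lemma Q_le: "(Q::real) > 0 \<Longrightarrow> 0 \<le> a \<Longrightarrow> a \<le> Q \<Longrightarrow> (1/Q) * a \<le> 1"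
  by (simp add: field_simps)

theorem lemma5p3:
  fixes N :: nat and Xs :: "real \<times> real" and Y0 :: "nat \<Rightarrow> real \<times> real"
    and \<gamma> h0 :: real
  assumes "N \<ge> 2" and "snd Xs > 0"
    and "inj_on (\<lambda>i. snd (Y0 i)) {1..N}"
    and "\<gamma> > 0" and "h0 > 0"
  shows "\<exists>TX>0. \<exists>\<epsilon>0>0. \<exists>C>0. \<epsilon>0 < 1 \<and>
    (\<exists>Y. is_Y_sol N \<gamma> (snd Xs) Y0 TX Y) \<and>
    (\<forall>\<epsilon>\<in>{0<..\<epsilon>0}.
       (\<exists>X. is_X_sol N \<gamma> \<epsilon> (X0eps Xs Y0 \<epsilon>) TX X) \<and>
       (\<forall>X Y. is_X_sol N \<gamma> \<epsilon> (X0eps Xs Y0 \<epsilon>) TX X \<longrightarrow> is_Y_sol N \<gamma> (snd Xs) Y0 TX Y \<longrightarrow>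
          (\<forall>t\<in>{0..TX}. \<forall>i\<in>{1..N}.
             X i t \<in> regionA (fst Xs) \<epsilon> (snd (X0eps Xs Y0 \<epsilon> i)) (d0 N Y0) h0 \<and>
             Xtilde \<gamma> Xs \<epsilon> Y i t \<in> regionA (fst Xs) \<epsilon> (snd (X0eps Xs Y0 \<epsilon> i)) (d0 N Y0) h0 \<and>
             norm (X i t - Xtilde \<gamma> Xs \<epsilon> Y i t) \<le> C / lnabs \<epsilon>)))"
proof -
  note N = assms(1) and rpos = assms(2) and inj = assms(3) and gpos = assms(4) and hpos = assms(5)
  define r where "r = snd Xs"
  have r: "r > 0" using rpos r_def by simp
  define \<delta> where "\<delta> = d0 N Y0"
  have \<delta>: "\<delta> > 0" using d0_props(1)[OF N inj] \<delta>_def by simp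
  have sepY0: "\<forall>j\<in>{1..N}. \<forall>k\<in>{1..N}. j \<noteq> k \<longrightarrow> 4 * \<delta> \<le> \<bar>snd (Y0 j) - snd (Y0 k)\<bar>"
    using d0_props(2)[OF N inj] \<delta>_def by simp
  define R0 where "R0 = (\<Sum>i\<in>{1..N}. norm (Y0 i))"
  have nY0: "norm (Y0 i) \<le> R0" if "i \<in> {1..N}" for i
    unfolding R0_def using that by (intro member_le_sum) auto
  have R0: "R0 \<ge> 0" unfolding R0_def by (intro sum_nonneg) auto
  define Nr where "Nr = real N"
  have Nr: "Nr \<ge> 2" using N Nr_def by simp
  define KI where "KI = \<gamma> * (Nr + 1) / (8 * pi * \<delta>\<^sup>2)"
  define LX where "LX = \<gamma> / (pi * r\<^sup>2) + KI"
  define LY where "LY = KI + \<gamma> / (4 * pi * r\<^sup>2)"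
  define c where "c = \<gamma> * (\<delta> + R0)\<^sup>2 / (2 * pi * r^3)"
  define MY where "MY = \<gamma> * Nr / (4 * pi * \<delta>) + \<gamma> * (R0 + \<delta>) / (4 * pi * r\<^sup>2)"
  have KI: "KI \<ge> 0" unfolding KI_def using gpos Nr \<delta> by simp
  have LX: "LX \<ge> 0" unfolding LX_def using gpos r KI by simp
  have LY: "LY \<ge> 0" unfolding LY_def using gpos r KI by simp
  have c: "c \<ge> 0" unfolding c_def using gpos r by simp
  have MY: "MY \<ge> 0" unfolding MY_def using gpos r \<delta> Nr R0 by simp
  define Q where "Q = 1 + \<gamma> * Nr / (2 * pi * \<delta>\<^sup>2) + 2 * Nr * LX + 2 * Nr * LY + \<gamma> / (pi * r * h0)"
  have a1: "\<gamma> * Nr / (2 * pi * \<delta>\<^sup>2) \<ge> 0" using gpos Nr \<delta> by simp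
  have a2: "2 * Nr * LX \<ge> 0" "2 * Nr * LY \<ge> 0" using Nr LX LY by auto
  have a3: "\<gamma> / (pi * r * h0) \<ge> 0" using gpos r hpos by simp
  have Q: "Q > 0" unfolding Q_def using a1 a2 a3 by linarith
  define T where "T = 1 / Q"
  have T: "T > 0" unfolding T_def using Q by simp
  have TQ: "T * a \<le> 1" if "0 \<le> a" "a \<le> Q" for a unfolding T_def using Q_le[OF Q that] .
  have T1: "T * \<gamma> * Nr \<le> 2 * pi * \<delta>\<^sup>2"
  proof -
    have "T * (\<gamma> * Nr / (2 * pi * \<delta>\<^sup>2)) \<le> 1" using a1 a2 a3 by (intro TQ) (auto simp: Q_def)
    then show ?thesis using \<delta> by (simp add: field_simps)
  qed
  have T2: "T * LX * Nr \<le> 1/2"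
  proof -
    have "T * (2 * Nr * LX) \<le> 1" using a1 a2 a3 by (intro TQ) (auto simp: Q_def)
    then show ?thesis by (simp add: field_simps)
  qed
  have T3: "T * LY * Nr \<le> 1/2"
  proof -
    have "T * (2 * Nr * LY) \<le> 1" using a1 a2 a3 by (intro TQ) (auto simp: Q_def)
    then show ?thesis by (simp add: field_simps)
  qed
  have T4: "T * \<gamma> / (2 * pi * r) \<le> h0 / 2"
  proof -
    have "T * (\<gamma> / (pi * r * h0)) \<le> 1" using a1 a2 a3 by (intro TQ) (auto simp: Q_def)
    then show ?thesis using r hpos by (simp add: field_simps)
  qed
  define S0 where "S0 = 1 + 2 * (R0 + \<delta>) / r + 2 * (R0 + T * \<gamma> * Nr / (4 * pi * \<delta>)) / h0 + 2 * (R0 + T * MY) / h0"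
  have S0: "S0 \<ge> 1" "S0 \<ge> 2 * (R0 + \<delta>) / r" "S0 \<ge> 2 * (R0 + T * \<gamma> * Nr / (4 * pi * \<delta>)) / h0"
     "S0 \<ge> 2 * (R0 + T * MY) / h0"
  proof -
    have "2 * (R0 + \<delta>) / r \<ge> 0" "2 * (R0 + T * \<gamma> * Nr / (4 * pi * \<delta>)) / h0 \<ge> 0" "2 * (R0 + T * MY) / h0 \<ge> 0"
      using R0 \<delta> r hpos T gpos Nr MY by auto
    then show "S0 \<ge> 1" "S0 \<ge> 2 * (R0 + \<delta>) / r" "S0 \<ge> 2 * (R0 + T * \<gamma> * Nr / (4 * pi * \<delta>)) / h0"
     "S0 \<ge> 2 * (R0 + T * MY) / h0" unfolding S0_def by linarith+
  qed
  define \<epsilon>0 where "\<epsilon>0 = exp (- S0\<^sup>2)"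
  have \<epsilon>0: "\<epsilon>0 > 0" "\<epsilon>0 < 1" unfolding \<epsilon>0_def using S0(1) by auto
  define C where "C = 2 * Nr * T * c + 1"
  have C: "C > 0"
  proof -
    have "0 \<le> 2 * Nr * T * c" using Nr T c by (intro mult_nonneg_nonneg) auto
    then show ?thesis unfolding C_def by linarith
  qed
  have pi4: "pi > 0" by simp
  define GY :: "(nat \<Rightarrow> real \<times> real) set" where "GY = {P. \<forall>i\<in>{1..N}. \<bar>snd (P i) - snd (Y0 i)\<bar> \<le> \<delta>}"
  have sepY: "2 * \<delta> \<le> norm (P j - P k)" if "P \<in> GY" "j \<in> {1..N}" "k \<in> {1..N}" "j \<noteq> k" for P j k
    using sep_radial[of N P "\<lambda>j. snd (Y0 j)" \<delta> j k] sepY0 that unfolding GY_def by auto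
  have isumY: "norm (Isum N P i) \<le> Nr / (2 * \<delta>)" if "P \<in> GY" "i \<in> {1..N}" for P i
    unfolding Nr_def using \<delta> by (intro isum_bound) (use sepY that in auto)
  have sndY: "\<bar>snd (P i)\<bar> \<le> R0 + \<delta>" if "P \<in> GY" "i \<in> {1..N}" for P i
  proof -
    have "\<bar>snd (Y0 i)\<bar> \<le> R0" using norm_snd_le'[of "Y0 i"] nY0[OF that(2)] by linarith
    moreover have "\<bar>snd (P i) - snd (Y0 i)\<bar> \<le> \<delta>" using that unfolding GY_def by auto
    ultimately show ?thesis by linarith
  qed
  have sndvelY: "snd (velY N \<gamma> r P i) = \<gamma> / (2 * pi) * snd (Isum N P i)" for P i
    unfolding velY_eq ez_def by simp
  have bndY: "norm (velY N \<gamma> r P i) \<le> MY" if "P \<in> GY" "i \<in> {1..N}" for P i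
  proof -
    have "norm (velY N \<gamma> r P i) \<le> norm ((\<gamma> / (2 * pi)) *\<^sub>R Isum N P i) + norm ((\<gamma> / (4 * pi * r\<^sup>2) * snd (P i)) *\<^sub>R ez)"
      unfolding velY_eq by (rule norm_triangle_ineq4)
    also have "\<dots> = \<gamma> / (2 * pi) * norm (Isum N P i) + \<gamma> / (4 * pi * r\<^sup>2) * \<bar>snd (P i)\<bar>"
      using gpos r by (simp add: norm_ez abs_mult)
    also have "\<dots> \<le> \<gamma> / (2 * pi) * (Nr / (2 * \<delta>)) + \<gamma> / (4 * pi * r\<^sup>2) * (R0 + \<delta>)"
      using isumY[OF that] sndY[OF that] gpos r by (intro add_mono mult_left_mono) auto
    also have "\<dots> = MY" unfolding MY_def by (simp add: field_simps)
    finally show ?thesis .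
  qed
  have radY: "T * \<bar>snd (velY N \<gamma> r P i)\<bar> \<le> \<delta> / 2" if "P \<in> GY" "i \<in> {1..N}" for P i
  proof -
    have "\<bar>snd (Isum N P i)\<bar> \<le> Nr / (2 * \<delta>)" using norm_snd_le'[of "Isum N P i"] isumY[OF that] by linarith
    then have "\<bar>snd (velY N \<gamma> r P i)\<bar> \<le> \<gamma> / (2 * pi) * (Nr / (2 * \<delta>))"
    proof -
      have "\<bar>snd (velY N \<gamma> r P i)\<bar> = \<gamma> / (2 * pi) * \<bar>snd (Isum N P i)\<bar>"
        unfolding sndvelY using gpos by (simp add: abs_mult)
      also have "\<dots> \<le> \<gamma> / (2 * pi) * (Nr / (2 * \<delta>))" using gpos \<open>\<bar>snd (Isum N P i)\<bar> \<le> Nr / (2 * \<delta>)\<close>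
        by (intro mult_left_mono) auto
      finally show ?thesis .
    qed
    then have "T * \<bar>snd (velY N \<gamma> r P i)\<bar> \<le> T * (\<gamma> / (2 * pi) * (Nr / (2 * \<delta>)))"
      using T by (intro mult_left_mono) auto
    also have "\<dots> = (T * \<gamma> * Nr) / (4 * pi * \<delta>)" by (simp add: field_simps)
    also have "\<dots> \<le> (2 * pi * \<delta>\<^sup>2) / (4 * pi * \<delta>)" using T1 \<delta> by (intro divide_right_mono) auto
    also have "\<dots> = \<delta> / 2" using \<delta> by (simp add: field_simps power2_eq_square)
    finally show ?thesis .
  qed
  have lipY: "norm (velY N \<gamma> r P i - velY N \<gamma> r P' i) \<le> LY * (\<Sum>j\<in>{1..N}. norm (P j - P' j))"
    if "P \<in> GY" "P' \<in> GY" "i \<in> {1..N}" for P P' i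
  proof -
    define S where "S = (\<Sum>j\<in>{1..N}. norm (P j - P' j))"
    have e: "velY N \<gamma> r P i - velY N \<gamma> r P' i = (\<gamma> / (2 * pi)) *\<^sub>R (Isum N P i - Isum N P' i)
        - (\<gamma> / (4 * pi * r\<^sup>2) * (snd (P i) - snd (P' i))) *\<^sub>R ez"
      unfolding velY_eq ez_def by (simp add: prod_eq_iff algebra_simps diff_divide_distrib)
    have il: "norm (Isum N P i - Isum N P' i) \<le> ((Nr + 1) / (2 * \<delta>)\<^sup>2) * S"
      unfolding S_def Nr_def using \<delta> that(3) by (intro isum_lip) (use sepY that in auto)
    have sl: "\<bar>snd (P i) - snd (P' i)\<bar> \<le> S"
    proof -
      have "\<bar>snd (P i - P' i)\<bar> \<le> norm (P i - P' i)" by (rule norm_snd_le')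
      also have "\<dots> \<le> S" unfolding S_def using that(3) by (intro member_le_sum) auto
      finally show ?thesis by simp
    qed
    have "norm (velY N \<gamma> r P i - velY N \<gamma> r P' i) \<le> norm ((\<gamma> / (2 * pi)) *\<^sub>R (Isum N P i - Isum N P' i))
        + norm ((\<gamma> / (4 * pi * r\<^sup>2) * (snd (P i) - snd (P' i))) *\<^sub>R ez)"
      unfolding e by (rule norm_triangle_ineq4)
    also have "\<dots> = \<gamma> / (2 * pi) * norm (Isum N P i - Isum N P' i) + \<gamma> / (4 * pi * r\<^sup>2) * \<bar>snd (P i) - snd (P' i)\<bar>"
      using gpos r by (simp add: norm_ez abs_mult)
    also have "\<dots> \<le> \<gamma> / (2 * pi) * (((Nr + 1) / (2 * \<delta>)\<^sup>2) * S) + \<gamma> / (4 * pi * r\<^sup>2) * S"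
      using il sl gpos r by (intro add_mono mult_left_mono) auto
    also have "\<dots> = LY * S" unfolding LY_def KI_def by (simp add: field_simps power2_eq_square)
    finally show ?thesis unfolding S_def .
  qed
  obtain Ys where Ys: "\<forall>i\<in>{1..N}. Ys i 0 = Y0 i" "\<forall>t\<in>{0..T}. (\<lambda>k. Ys k t) \<in> GY"
     "\<forall>t\<in>{0..T}. \<forall>i\<in>{1..N}. (Ys i has_vector_derivative velY N \<gamma> r (\<lambda>k. Ys k t) i) (at t within {0..T})"
  proof -
    have "\<exists>p. (\<forall>i\<in>{1..N}. p i 0 = Y0 i) \<and> (\<forall>t\<in>{0..T}. (\<lambda>k. p k t) \<in> GY) \<and>
     (\<forall>t\<in>{0..T}. \<forall>i\<in>{1..N}. (p i has_vector_derivative velY N \<gamma> r (\<lambda>k. p k t) i) (at t within {0..T}))"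
    proof (rule picard[where G = GY and \<rho> = \<delta> and M = MY and Lc = LY])
      show "T * \<bar>snd (velY N \<gamma> r P i)\<bar> \<le> \<delta>" if "P \<in> GY" "i \<in> {1..N}" for P i
        using radY[OF that] \<delta> by linarith
      show "T * LY * real N \<le> 1/2" using T3 Nr_def by simp
    qed (use T LY MY \<delta> bndY lipY GY_def in auto)
    then show ?thesis using that by blast
  qed
  have YsolEx: "is_Y_sol N \<gamma> (snd Xs) Y0 T Ys"
    unfolding is_Y_sol_def r_def[symmetric]
    using Ys sepY \<delta> by fastforce
  define z where "z = fst Xs"
  have main: "(\<exists>X. is_X_sol N \<gamma> \<epsilon> (X0eps Xs Y0 \<epsilon>) T X) \<and>
       (\<forall>X Y. is_X_sol N \<gamma> \<epsilon> (X0eps Xs Y0 \<epsilon>) T X \<longrightarrow> is_Y_sol N \<gamma> (snd Xs) Y0 T Y \<longrightarrow>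
          (\<forall>t\<in>{0..T}. \<forall>i\<in>{1..N}.
             X i t \<in> regionA (fst Xs) \<epsilon> (snd (X0eps Xs Y0 \<epsilon> i)) (d0 N Y0) h0 \<and>
             Xtilde \<gamma> Xs \<epsilon> Y i t \<in> regionA (fst Xs) \<epsilon> (snd (X0eps Xs Y0 \<epsilon> i)) (d0 N Y0) h0 \<and>
             norm (X i t - Xtilde \<gamma> Xs \<epsilon> Y i t) \<le> C / lnabs \<epsilon>))"
    if eps: "\<epsilon> \<in> {0<..\<epsilon>0}" for \<epsilon>
  proof -
    define L where "L = lnabs \<epsilon>"
    define \<sigma> where "\<sigma> = sqrt L"
    have "ln \<epsilon> \<le> ln \<epsilon>0" using eps \<epsilon>0 by auto
    then have "ln \<epsilon> \<le> - S0\<^sup>2" unfolding \<epsilon>0_def by simp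
    then have LS: "L \<ge> S0\<^sup>2" unfolding L_def lnabs_def by linarith
    have L1: "L \<ge> 1" using LS S0(1) by (smt (verit) one_le_power)
    have \<sigma>S: "\<sigma> \<ge> S0" unfolding \<sigma>_def using LS S0(1) by (intro real_le_rsqrt) auto
    have \<sigma>1: "\<sigma> \<ge> 1" using \<sigma>S S0(1) by linarith
    have \<sigma>0: "\<sigma> > 0" using \<sigma>1 by linarith
    have \<sigma>L: "\<sigma>\<^sup>2 = L" unfolding \<sigma>_def using L1 by simp
    have \<sigma>L': "\<sigma> * \<sigma> = L" using \<sigma>L by (simp add: power2_eq_square)
    define X0 where "X0 = X0eps Xs Y0 \<epsilon>"
    have X0: "X0 i = Xs + (1 / \<sigma>) *\<^sub>R Y0 i" for i unfolding X0_def X0eps_def \<sigma>_def L_def by simp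
    have sX0: "snd (X0 i) = r + snd (Y0 i) / \<sigma>" for i unfolding X0 r_def by simp
    have fX0: "fst (X0 i) = z + fst (Y0 i) / \<sigma>" for i unfolding X0 z_def by simp
    have sY0R: "\<bar>snd (Y0 i)\<bar> \<le> R0" if "i \<in> {1..N}" for i using norm_snd_le'[of "Y0 i"] nY0[OF that] by linarith
    have fY0R: "\<bar>fst (Y0 i)\<bar> \<le> R0" if "i \<in> {1..N}" for i using norm_fst_le'[of "Y0 i"] nY0[OF that] by linarith
    define GX :: "(nat \<Rightarrow> real \<times> real) set" where "GX = {P. \<forall>i\<in>{1..N}. \<bar>snd (P i) - snd (X0 i)\<bar> \<le> \<delta> / \<sigma>}"
    have sepX0: "\<forall>j\<in>{1..N}. \<forall>k\<in>{1..N}. j \<noteq> k \<longrightarrow> 4 * (\<delta> / \<sigma>) \<le> \<bar>snd (X0 j) - snd (X0 k)\<bar>"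
    proof (intro ballI impI)
      fix j k assume jk: "j \<in> {1..N}" "k \<in> {1..N}" "j \<noteq> k"
      have "snd (X0 j) - snd (X0 k) = (snd (Y0 j) - snd (Y0 k)) / \<sigma>" unfolding sX0 by (simp add: diff_divide_distrib)
      then have "\<bar>snd (X0 j) - snd (X0 k)\<bar> = \<bar>snd (Y0 j) - snd (Y0 k)\<bar> / \<sigma>" using \<sigma>0 by simp
      moreover have "4 * \<delta> \<le> \<bar>snd (Y0 j) - snd (Y0 k)\<bar>" using sepY0 jk by auto
      ultimately show "4 * (\<delta> / \<sigma>) \<le> \<bar>snd (X0 j) - snd (X0 k)\<bar>" using \<sigma>0 by (simp add: divide_right_mono)
    qed
    have sepX: "2 * (\<delta> / \<sigma>) \<le> norm (P j - P k)" if "P \<in> GX" "j \<in> {1..N}" "k \<in> {1..N}" "j \<noteq> k" for P j k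
      using sep_radial[of N P "\<lambda>j. snd (X0 j)" "\<delta> / \<sigma>" j k] sepX0 that unfolding GX_def by auto
    have radr: "\<bar>snd (P i) - r\<bar> \<le> (R0 + \<delta>) / \<sigma>" if "P \<in> GX" "i \<in> {1..N}" for P i
    proof -
      have "\<bar>snd (P i) - snd (X0 i)\<bar> \<le> \<delta> / \<sigma>" using that unfolding GX_def by auto
      moreover have "\<bar>snd (X0 i) - r\<bar> \<le> R0 / \<sigma>" unfolding sX0 using sY0R[OF that(2)] \<sigma>0
        by (simp add: divide_right_mono)
      ultimately show ?thesis by (simp add: add_divide_distrib)
    qed
    have Rr: "(R0 + \<delta>) / \<sigma> \<le> r / 2"
    proof -
      have "2 * (R0 + \<delta>) / r \<le> \<sigma>" using S0(2) \<sigma>S by linarith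
      then show ?thesis using r \<sigma>0 by (simp add: field_simps)
    qed
    have rad2: "snd (P i) \<ge> r / 2" if "P \<in> GX" "i \<in> {1..N}" for P i
      using radr[OF that] Rr by linarith
    have isumX: "norm (Isum N P i) \<le> Nr / (2 * (\<delta> / \<sigma>))" if "P \<in> GX" "i \<in> {1..N}" for P i
      unfolding Nr_def using \<delta> \<sigma>0 by (intro isum_bound) (use sepX that in auto)
    define MX where "MX = \<gamma> / (2 * pi * r) + \<gamma> * Nr / (4 * pi * \<delta> * \<sigma>)"
    have cI: "\<gamma> / (2 * pi * L) * (Nr / (2 * (\<delta> / \<sigma>))) = \<gamma> * Nr / (4 * pi * \<delta> * \<sigma>)"
      using \<sigma>0 \<delta> unfolding \<sigma>L'[symmetric] by (simp add: field_simps)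
    have zb: "\<bar>\<gamma> / (4 * pi * snd (P i))\<bar> \<le> \<gamma> / (2 * pi * r)" if "P \<in> GX" "i \<in> {1..N}" for P i
    proof -
      have sp: "snd (P i) \<ge> r / 2" by (rule rad2[OF that])
      then have "\<bar>\<gamma> / (4 * pi * snd (P i))\<bar> = \<gamma> / (4 * pi * snd (P i))" using r gpos by simp
      also have "\<dots> \<le> \<gamma> / (4 * pi * (r / 2))" using sp r gpos by (intro divide_left_mono mult_left_mono mult_pos_pos) auto
      also have "\<dots> = \<gamma> / (2 * pi * r)" by simp
      finally show ?thesis .
    qed
    have bndX: "norm (velX N \<gamma> \<epsilon> P i) \<le> MX" if "P \<in> GX" "i \<in> {1..N}" for P i
    proof -
      have "norm (velX N \<gamma> \<epsilon> P i) \<le> norm ((\<gamma> / (4 * pi * snd (P i))) *\<^sub>R ez) + norm ((\<gamma> / (2 * pi * L)) *\<^sub>R Isum N P i)"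
        unfolding velX_eq L_def by (rule norm_triangle_ineq)
      also have "\<dots> = \<bar>\<gamma> / (4 * pi * snd (P i))\<bar> + \<gamma> / (2 * pi * L) * norm (Isum N P i)"
        using gpos L1 by (simp add: norm_ez)
      also have "\<dots> \<le> \<gamma> / (2 * pi * r) + \<gamma> / (2 * pi * L) * (Nr / (2 * (\<delta> / \<sigma>)))"
        using zb[OF that] isumX[OF that] gpos L1 by (intro add_mono mult_left_mono) auto
      also have "\<dots> = MX" unfolding MX_def cI ..
      finally show ?thesis .
    qed
    have radX: "T * \<bar>snd (velX N \<gamma> \<epsilon> P i)\<bar> \<le> (\<delta> / \<sigma>) / 2" if "P \<in> GX" "i \<in> {1..N}" for P i
    proof -
      have "\<bar>snd (Isum N P i)\<bar> \<le> Nr / (2 * (\<delta> / \<sigma>))" using norm_snd_le'[of "Isum N P i"] isumX[OF that] by linarith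
      have "\<bar>snd (velX N \<gamma> \<epsilon> P i)\<bar> = \<gamma> / (2 * pi * L) * \<bar>snd (Isum N P i)\<bar>"
        unfolding velX_eq L_def[symmetric] ez_def using gpos L1 by (simp add: abs_mult)
      also have "\<dots> \<le> \<gamma> / (2 * pi * L) * (Nr / (2 * (\<delta> / \<sigma>)))"
        using \<open>\<bar>snd (Isum N P i)\<bar> \<le> Nr / (2 * (\<delta> / \<sigma>))\<close> gpos L1 by (intro mult_left_mono) auto
      also have "\<dots> = \<gamma> * Nr / (4 * pi * \<delta> * \<sigma>)" by (rule cI)
      finally have "T * \<bar>snd (velX N \<gamma> \<epsilon> P i)\<bar> \<le> T * (\<gamma> * Nr / (4 * pi * \<delta> * \<sigma>))"
        using T by (intro mult_left_mono) auto
      also have "\<dots> = (T * \<gamma> * Nr) / (4 * pi * \<delta> * \<sigma>)" by simp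
      also have "\<dots> \<le> (2 * pi * \<delta>\<^sup>2) / (4 * pi * \<delta> * \<sigma>)" using T1 \<delta> \<sigma>0 by (intro divide_right_mono) auto
      also have "\<dots> = (\<delta> / \<sigma>) / 2" using \<delta> \<sigma>0 by (simp add: field_simps power2_eq_square)
      finally show ?thesis .
    qed
    have lipX: "norm (velX N \<gamma> \<epsilon> P i - velX N \<gamma> \<epsilon> P' i) \<le> LX * (\<Sum>j\<in>{1..N}. norm (P j - P' j))"
      if "P \<in> GX" "P' \<in> GX" "i \<in> {1..N}" for P P' i
    proof -
      define S where "S = (\<Sum>j\<in>{1..N}. norm (P j - P' j))"
      have e: "velX N \<gamma> \<epsilon> P i - velX N \<gamma> \<epsilon> P' i = (\<gamma> / (4 * pi) * (1 / snd (P i) - 1 / snd (P' i))) *\<^sub>R ez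
          + (\<gamma> / (2 * pi * L)) *\<^sub>R (Isum N P i - Isum N P' i)"
        unfolding velX_eq L_def ez_def by (simp add: prod_eq_iff algebra_simps diff_divide_distrib)
      have il: "norm (Isum N P i - Isum N P' i) \<le> ((Nr + 1) / (2 * (\<delta> / \<sigma>))\<^sup>2) * S"
        unfolding S_def Nr_def using \<delta> \<sigma>0 that(3) by (intro isum_lip) (use sepX that in auto)
      have sl: "\<bar>snd (P i) - snd (P' i)\<bar> \<le> S"
      proof -
        have "\<bar>snd (P i - P' i)\<bar> \<le> norm (P i - P' i)" by (rule norm_snd_le')
        also have "\<dots> \<le> S" unfolding S_def using that(3) by (intro member_le_sum) auto
        finally show ?thesis by simp
      qed
      have ib: "\<bar>1 / snd (P i) - 1 / snd (P' i)\<bar> \<le> 4 / r\<^sup>2 * S"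
      proof -
        have "\<bar>1 / snd (P i) - 1 / snd (P' i)\<bar> \<le> 4 / r\<^sup>2 * \<bar>snd (P i) - snd (P' i)\<bar>"
          using inv_diff_bound[OF r rad2[OF that(1,3)] rad2[OF that(2,3)]] .
        also have "\<dots> \<le> 4 / r\<^sup>2 * S" using sl r by (intro mult_left_mono) auto
        finally show ?thesis .
      qed
      have "norm (velX N \<gamma> \<epsilon> P i - velX N \<gamma> \<epsilon> P' i) \<le> norm ((\<gamma> / (4 * pi) * (1 / snd (P i) - 1 / snd (P' i))) *\<^sub>R ez)
          + norm ((\<gamma> / (2 * pi * L)) *\<^sub>R (Isum N P i - Isum N P' i))"
        unfolding e by (rule norm_triangle_ineq)
      also have "\<dots> = \<gamma> / (4 * pi) * \<bar>1 / snd (P i) - 1 / snd (P' i)\<bar> + \<gamma> / (2 * pi * L) * norm (Isum N P i - Isum N P' i)"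
        using gpos L1 by (simp add: norm_ez abs_mult)
      also have "\<dots> \<le> \<gamma> / (4 * pi) * (4 / r\<^sup>2 * S) + \<gamma> / (2 * pi * L) * (((Nr + 1) / (2 * (\<delta> / \<sigma>))\<^sup>2) * S)"
        using ib il gpos L1 by (intro add_mono mult_left_mono) auto
      also have "\<dots> = LX * S"
        unfolding LX_def KI_def using \<sigma>0 \<delta> r unfolding \<sigma>L'[symmetric] by (simp add: field_simps power2_eq_square)
      finally show ?thesis unfolding S_def .
    qed
    have Xex: "\<exists>X. is_X_sol N \<gamma> \<epsilon> X0 T X"
    proof -
      have "\<exists>p. (\<forall>i\<in>{1..N}. p i 0 = X0 i) \<and> (\<forall>t\<in>{0..T}. (\<lambda>k. p k t) \<in> GX) \<and>
       (\<forall>t\<in>{0..T}. \<forall>i\<in>{1..N}. (p i has_vector_derivative velX N \<gamma> \<epsilon> (\<lambda>k. p k t) i) (at t within {0..T}))"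
      proof (rule picard[where G = GX and \<rho> = "\<delta> / \<sigma>" and M = MX and Lc = LX])
        show "T * \<bar>snd (velX N \<gamma> \<epsilon> P i)\<bar> \<le> \<delta> / \<sigma>" if "P \<in> GX" "i \<in> {1..N}" for P i
        proof -
          have h: "\<delta> / \<sigma> / 2 \<le> \<delta> / \<sigma>" using divide_pos_pos[OF \<delta> \<sigma>0] by simp
          show ?thesis by (rule order_trans[OF radX[OF that] h])
        qed
        show "T * LX * real N \<le> 1/2" using T2 Nr_def by simp
        show "MX \<ge> 0" unfolding MX_def using gpos r \<delta> \<sigma>0 Nr by simp
      qed (use T LX \<delta> \<sigma>0 bndX lipX GX_def in auto)
      then obtain p where p: "\<forall>i\<in>{1..N}. p i 0 = X0 i" "\<forall>t\<in>{0..T}. (\<lambda>k. p k t) \<in> GX"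
        "\<forall>t\<in>{0..T}. \<forall>i\<in>{1..N}. (p i has_vector_derivative velX N \<gamma> \<epsilon> (\<lambda>k. p k t) i) (at t within {0..T})"
        by blast
      have "is_X_sol N \<gamma> \<epsilon> X0 T p"
        unfolding is_X_sol_def
      proof (intro conjI ballI impI)
        fix t i assume t: "t \<in> {0..T}" and i: "i \<in> {1..N}"
        have inG: "(\<lambda>k. p k t) \<in> GX" using p(2) t by blast
        show "snd (p i t) > 0" using rad2[OF inG i] r by simp
        fix j assume j: "j \<in> {1..N}" and ij: "i \<noteq> j"
        have "2 * (\<delta> / \<sigma>) \<le> norm (p i t - p j t)" using sepX[OF inG i j ij] by simp
        moreover have "0 < \<delta> / \<sigma>" using \<delta> \<sigma>0 by simp
        ultimately have "norm (p i t - p j t) > 0" by linarith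
        then show "p i t \<noteq> p j t" by auto
      qed (use p in auto)
      then show ?thesis by blast
    qed
    have sq: "sqrt (lnabs \<epsilon>) = \<sigma>" unfolding \<sigma>_def L_def ..
    have part2: "\<forall>t\<in>{0..T}. \<forall>i\<in>{1..N}.
             X i t \<in> regionA (fst Xs) \<epsilon> (snd (X0 i)) (d0 N Y0) h0 \<and>
             Xtilde \<gamma> Xs \<epsilon> Y i t \<in> regionA (fst Xs) \<epsilon> (snd (X0 i)) (d0 N Y0) h0 \<and>
             norm (X i t - Xtilde \<gamma> Xs \<epsilon> Y i t) \<le> C / lnabs \<epsilon>"
      if hX: "is_X_sol N \<gamma> \<epsilon> X0 T X" and hY: "is_Y_sol N \<gamma> r Y0 T Y" for X Y
    proof -
      have X0': "\<forall>i\<in>{1..N}. X i 0 = X0 i"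
        and dX: "\<forall>t\<in>{0..T}. \<forall>i\<in>{1..N}. (X i has_vector_derivative velX N \<gamma> \<epsilon> (\<lambda>k. X k t) i) (at t within {0..T})"
        using hX unfolding is_X_sol_def by auto
      have Y0': "\<forall>i\<in>{1..N}. Y i 0 = Y0 i"
        and dY: "\<forall>t\<in>{0..T}. \<forall>i\<in>{1..N}. (Y i has_vector_derivative velY N \<gamma> r (\<lambda>k. Y k t) i) (at t within {0..T})"
        using hY unfolding is_Y_sol_def by auto
      have bX: "\<forall>t\<in>{0..T}. \<forall>i\<in>{1..N}. \<bar>snd (X i t) - snd (X0 i)\<bar> \<le> (\<delta> / \<sigma>) / 2"
      proof (rule barrier[OF T _ X0' dX])
        show "0 < \<delta> / \<sigma>" using \<delta> \<sigma>0 by simp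
        fix P :: "nat \<Rightarrow> real \<times> real" and i assume "\<forall>j\<in>{1..N}. \<bar>snd (P j) - snd (X0 j)\<bar> \<le> \<delta> / \<sigma>" "i \<in> {1..N}"
        then show "T * \<bar>snd (velX N \<gamma> \<epsilon> P i)\<bar> \<le> \<delta> / \<sigma> / 2" using radX unfolding GX_def by blast
      qed
      have bY: "\<forall>t\<in>{0..T}. \<forall>i\<in>{1..N}. \<bar>snd (Y i t) - snd (Y0 i)\<bar> \<le> \<delta> / 2"
      proof (rule barrier[OF T \<delta> Y0' dY])
        fix P :: "nat \<Rightarrow> real \<times> real" and i assume "\<forall>j\<in>{1..N}. \<bar>snd (P j) - snd (Y0 j)\<bar> \<le> \<delta>" "i \<in> {1..N}"
        then show "T * \<bar>snd (velY N \<gamma> r P i)\<bar> \<le> \<delta> / 2" using radY unfolding GY_def by blast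
      qed
      have inGX: "(\<lambda>k. X k t) \<in> GX" if "t \<in> {0..T}" for t
        unfolding GX_def using bX that divide_pos_pos[OF \<delta> \<sigma>0] by fastforce
      have inGY: "(\<lambda>k. Y k t) \<in> GY" if "t \<in> {0..T}" for t
        unfolding GY_def using bY that \<delta> by fastforce
      have hA: "(R0 + T * \<gamma> * Nr / (4 * pi * \<delta>)) / \<sigma> \<le> h0 / 2"
      proof -
        have "2 * (R0 + T * \<gamma> * Nr / (4 * pi * \<delta>)) / h0 \<le> \<sigma>" using S0(3) \<sigma>S by linarith
        then show ?thesis using hpos \<sigma>0 by (simp add: field_simps)
      qed
      have hB: "(R0 + T * MY) / \<sigma> \<le> h0 / 2"
      proof -
        have "2 * (R0 + T * MY) / h0 \<le> \<sigma>" using S0(4) \<sigma>S by linarith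
        then show ?thesis using hpos \<sigma>0 by (simp add: field_simps)
      qed
      have Xt: "Xtilde \<gamma> Xs \<epsilon> Y i t = Xs + (\<gamma> / (4 * pi * r) * t) *\<^sub>R ez + (1 / \<sigma>) *\<^sub>R Y i t" for i t
        unfolding Xtilde_def sq r_def ..
      define D where "D i t = X i t - Xtilde \<gamma> Xs \<epsilon> Y i t" for i t
      define V where "V i t = velX N \<gamma> \<epsilon> (\<lambda>k. X k t) i - ((\<gamma> / (4 * pi * r)) *\<^sub>R ez + (1 / \<sigma>) *\<^sub>R velY N \<gamma> r (\<lambda>k. Y k t) i)" for i t
      have dD: "(D i has_vector_derivative V i t) (at t within {0..T})" if "t \<in> {0..T}" "i \<in> {1..N}" for i t
      proof -
        have e: "D i = (\<lambda>t. X i t - (Xs + (\<gamma> / (4 * pi * r) * t) *\<^sub>R ez + (1 / \<sigma>) *\<^sub>R Y i t))"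
          unfolding D_def Xt ..
        have hx: "(X i has_vector_derivative velX N \<gamma> \<epsilon> (\<lambda>k. X k t) i) (at t within {0..T})" using dX that by auto
        have hy: "(Y i has_vector_derivative velY N \<gamma> r (\<lambda>k. Y k t) i) (at t within {0..T})" using dY that by auto
        have h1: "((\<lambda>t. Xs + (\<gamma> / (4 * pi * r) * t) *\<^sub>R ez) has_vector_derivative (\<gamma> / (4 * pi * r)) *\<^sub>R ez) (at t within {0..T})"
          using r by (auto intro!: derivative_eq_intros)
        have h2: "((\<lambda>t. (1 / \<sigma>) *\<^sub>R Y i t) has_vector_derivative (1 / \<sigma>) *\<^sub>R velY N \<gamma> r (\<lambda>k. Y k t) i) (at t within {0..T})"
          by (rule bounded_linear.has_vector_derivative[OF bounded_linear_scaleR_right hy])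
        from has_vector_derivative_diff[OF hx has_vector_derivative_add[OF h1 h2]]
        show ?thesis unfolding e V_def by (simp add: add.assoc)
      qed
      have D0: "D i 0 = 0" if "i \<in> {1..N}" for i
        unfolding D_def Xt using X0' Y0' that unfolding X0 by simp
      have Vb: "norm (V i t) \<le> LY * (\<Sum>j\<in>{1..N}. norm (D j t)) + c / L" if t: "t \<in> {0..T}" and i: "i \<in> {1..N}" for i t
      proof -
        define P where "P = (\<lambda>k. X k t)"
        define W where "W = (\<lambda>k. Y k t)"
        define Z where "Z = (\<lambda>k. Xtilde \<gamma> Xs \<epsilon> Y k t)"
        define S where "S = (\<Sum>j\<in>{1..N}. norm (D j t))"
        have PG: "P \<in> GX" unfolding P_def by (rule inGX[OF t])
        have WG: "W \<in> GY" unfolding W_def by (rule inGY[OF t])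
        have ZW: "Z i - Z j = (1 / \<sigma>) *\<^sub>R (W i - W j)" for j
          unfolding Z_def W_def Xt by (simp add: algebra_simps)
        have IZ: "Isum N Z i = \<sigma> *\<^sub>R Isum N W i"
          using isum_scale[of "1 / \<sigma>" N Z i W] ZW \<sigma>0 by simp
        have Veq: "V i t = (\<gamma> / (4 * pi) * (1 / snd (P i) - 1 / r + snd (W i) / (r\<^sup>2 * \<sigma>))) *\<^sub>R ez
            + (\<gamma> / (2 * pi * L)) *\<^sub>R (Isum N P i - Isum N Z i)"
          unfolding V_def IZ velX_eq velY_eq P_def[symmetric] W_def[symmetric] L_def[symmetric]
          unfolding \<sigma>L'[symmetric] ez_def using \<sigma>0 r
          by (simp add: prod_eq_iff algebra_simps diff_divide_distrib add_divide_distrib)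
        define a where "a = snd (P i)"
        define u where "u = a - r"
        define w where "w = snd (W i) / \<sigma>"
        have a: "a \<ge> r / 2" unfolding a_def by (rule rad2[OF PG i])
        have apos: "a > 0" using a r by linarith
        have u: "\<bar>u\<bar> \<le> (R0 + \<delta>) / \<sigma>" unfolding u_def a_def using radr[OF PG i] .
        have u2: "u\<^sup>2 \<le> (R0 + \<delta>)\<^sup>2 / L"
        proof -
          have "u\<^sup>2 = \<bar>u\<bar>\<^sup>2" by simp
          also have "\<dots> \<le> ((R0 + \<delta>) / \<sigma>)\<^sup>2" using u by (intro power_mono) auto
          also have "\<dots> = (R0 + \<delta>)\<^sup>2 / L" using \<sigma>L by (simp add: power_divide)
          finally show ?thesis .
        qed
        have Dsnd: "snd (D i t) = u - w"
          unfolding D_def Xt u_def a_def w_def P_def W_def r_def ez_def by simp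
        have Dn: "\<bar>u - w\<bar> \<le> norm (D i t)" using norm_snd_le'[of "D i t"] Dsnd by simp
        have DS: "norm (D i t) \<le> S" unfolding S_def using i by (intro member_le_sum) auto
        have sid: "1 / a - 1 / r + w / r\<^sup>2 = u\<^sup>2 / (r\<^sup>2 * a) - (u - w) / r\<^sup>2"
          unfolding u_def using apos r by (simp add: field_simps power2_eq_square)
        have "\<bar>1 / a - 1 / r + w / r\<^sup>2\<bar> \<le> u\<^sup>2 / (r\<^sup>2 * a) + \<bar>u - w\<bar> / r\<^sup>2"
        proof -
          have "u\<^sup>2 / (r\<^sup>2 * a) \<ge> 0" using apos by simp
          moreover have "\<bar>(u - w) / r\<^sup>2\<bar> = \<bar>u - w\<bar> / r\<^sup>2" by simp
          ultimately show ?thesis unfolding sid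
            using abs_triangle_ineq4[of "u\<^sup>2 / (r\<^sup>2 * a)" "(u - w) / r\<^sup>2"] apos by (simp add: abs_mult)
        qed
        also have "\<dots> \<le> ((R0 + \<delta>)\<^sup>2 / L) / (r\<^sup>2 * (r / 2)) + S / r\<^sup>2"
        proof (rule add_mono)
          show "u\<^sup>2 / (r\<^sup>2 * a) \<le> ((R0 + \<delta>)\<^sup>2 / L) / (r\<^sup>2 * (r / 2))"
            using u2 a r L1 by (intro frac_le mult_left_mono) auto
          show "\<bar>u - w\<bar> / r\<^sup>2 \<le> S / r\<^sup>2" using Dn DS r by (simp add: divide_right_mono)
        qed
        finally have sb: "\<bar>1 / a - 1 / r + w / r\<^sup>2\<bar> \<le> ((R0 + \<delta>)\<^sup>2 / L) / (r\<^sup>2 * (r / 2)) + S / r\<^sup>2" .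
        have sepZ: "2 * (\<delta> / \<sigma>) \<le> norm (Z i - Z j)" if "j \<in> {1..N}" "j \<noteq> i" for j
        proof -
          have "norm (Z i - Z j) = norm (W i - W j) / \<sigma>" unfolding ZW using \<sigma>0 by simp
          moreover have "2 * \<delta> \<le> norm (W i - W j)" using sepY[OF WG i that(1)] that(2) by auto
          ultimately show ?thesis using \<sigma>0 by (simp add: divide_right_mono)
        qed
        have PZ: "P j - Z j = D j t" for j unfolding P_def Z_def D_def ..
        have il: "norm (Isum N P i - Isum N Z i) \<le> ((Nr + 1) / (2 * (\<delta> / \<sigma>))\<^sup>2) * S"
          unfolding S_def Nr_def PZ[symmetric] using \<delta> \<sigma>0 i
          by (intro isum_lip) (use sepX[OF PG] sepZ in auto)
        have "norm (V i t) \<le> norm ((\<gamma> / (4 * pi) * (1 / snd (P i) - 1 / r + snd (W i) / (r\<^sup>2 * \<sigma>))) *\<^sub>R ez)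
            + norm ((\<gamma> / (2 * pi * L)) *\<^sub>R (Isum N P i - Isum N Z i))"
          unfolding Veq by (rule norm_triangle_ineq)
        also have "\<dots> = \<gamma> / (4 * pi) * \<bar>1 / a - 1 / r + w / r\<^sup>2\<bar> + \<gamma> / (2 * pi * L) * norm (Isum N P i - Isum N Z i)"
        proof -
          have s_eq: "1 / snd (P i) - 1 / r + snd (W i) / (r\<^sup>2 * \<sigma>) = 1 / a - 1 / r + w / r\<^sup>2"
            unfolding a_def w_def by simp
          show ?thesis unfolding s_eq using gpos L1 by (simp add: norm_ez abs_mult)
        qed
        also have "\<dots> \<le> \<gamma> / (4 * pi) * (((R0 + \<delta>)\<^sup>2 / L) / (r\<^sup>2 * (r / 2)) + S / r\<^sup>2)
            + \<gamma> / (2 * pi * L) * (((Nr + 1) / (2 * (\<delta> / \<sigma>))\<^sup>2) * S)"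
          using sb il gpos L1 by (intro add_mono mult_left_mono) auto
        also have "\<dots> = LY * S + c / L"
          unfolding LY_def KI_def c_def using \<sigma>0 \<delta> r unfolding \<sigma>L'[symmetric]
          by (simp add: field_simps power2_eq_square power3_eq_cube)
        finally show ?thesis unfolding S_def .
      qed
      define \<phi> where "\<phi> t = (\<Sum>j\<in>{1..N}. norm (D j t))" for t
      have cD: "continuous_on {0..T} (D j)" if "j \<in> {1..N}" for j
        by (rule cont_from_deriv[OF dD[OF _ that]])
      have c\<phi>: "continuous_on {0..T} \<phi>" unfolding \<phi>_def using cD by (intro continuous_intros) auto
      obtain ts where ts: "ts \<in> {0..T}" "\<And>s. s \<in> {0..T} \<Longrightarrow> \<phi> s \<le> \<phi> ts"
        using continuous_attains_sup[OF compact_Icc _ c\<phi>] T by fastforce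
      define E where "E = \<phi> ts"
      have E0: "E \<ge> 0" unfolding E_def \<phi>_def by (intro sum_nonneg) auto
      have Dbd: "norm (D i t) \<le> (LY * E + c / L) * T" if "t \<in> {0..T}" "i \<in> {1..N}" for i t
      proof -
        have "norm (D i t - D i 0) \<le> (LY * E + c / L) * t"
        proof (rule deriv_bound[OF dD[OF _ that(2)] _ that(1)])
          fix s assume s: "s \<in> {0..T}"
          have "LY * \<phi> s \<le> LY * E" unfolding E_def using ts(2)[OF s] LY by (intro mult_left_mono) auto
          then show "norm (V i s) \<le> LY * E + c / L" using Vb[OF s that(2)] unfolding \<phi>_def by linarith
        qed
        also have "\<dots> \<le> (LY * E + c / L) * T"
          using that(1) LY E0 c L1 by (intro mult_left_mono) auto
        finally show ?thesis using D0[OF that(2)] by simp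
      qed
      have "E \<le> (\<Sum>j\<in>{1..N}. (LY * E + c / L) * T)"
      proof -
        have "E = (\<Sum>j\<in>{1..N}. norm (D j ts))" unfolding E_def \<phi>_def ..
        also have "\<dots> \<le> (\<Sum>j\<in>{1..N}. (LY * E + c / L) * T)" using Dbd ts(1) by (intro sum_mono) auto
        finally show ?thesis .
      qed
      also have "\<dots> = (Nr * T * LY) * E + Nr * T * c / L" unfolding Nr_def by (simp add: algebra_simps)
      finally have "E \<le> (Nr * T * LY) * E + Nr * T * c / L" .
      moreover have "(Nr * T * LY) * E \<le> (1/2) * E" using T3 E0 by (intro mult_right_mono) (auto simp: ac_simps)
      ultimately have "E \<le> 2 * (Nr * T * c / L)" by linarith
      then have EB: "E \<le> 2 * Nr * T * c / L" by simp
      have err: "norm (X i t - Xtilde \<gamma> Xs \<epsilon> Y i t) \<le> C / lnabs \<epsilon>" if "t \<in> {0..T}" "i \<in> {1..N}" for t i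
      proof -
        have "norm (D i t) \<le> \<phi> t" unfolding \<phi>_def using that(2) by (intro member_le_sum) auto
        also have "\<dots> \<le> E" unfolding E_def using ts(2)[OF that(1)] .
        also have "\<dots> \<le> 2 * Nr * T * c / L" by (rule EB)
        also have "\<dots> \<le> C / L" unfolding C_def using L1 by (simp add: divide_right_mono)
        finally show ?thesis unfolding D_def L_def .
      qed
      show ?thesis
      proof (intro ballI conjI)
        fix t i assume t: "t \<in> {0..T}" and i: "i \<in> {1..N}"
        show "norm (X i t - Xtilde \<gamma> Xs \<epsilon> Y i t) \<le> C / lnabs \<epsilon>" by (rule err[OF t i])
        have "norm (X i t - X i 0) \<le> MX * t"
          by (rule deriv_bound[of T "X i" "\<lambda>s. velX N \<gamma> \<epsilon> (\<lambda>k. X k s) i" MX t]) (use dX bndX inGX i t in auto)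
        then have "\<bar>fst (X i t) - fst (X0 i)\<bar> \<le> MX * t"
          using norm_fst_le'[of "X i t - X i 0"] X0' i by simp
        moreover have "MX * t \<le> MX * T" using t gpos r \<delta> \<sigma>0 Nr unfolding MX_def by (intro mult_left_mono) auto
        moreover have "MX * T = T * \<gamma> / (2 * pi * r) + (T * \<gamma> * Nr / (4 * pi * \<delta>)) / \<sigma>"
          unfolding MX_def using \<delta> \<sigma>0 r by (simp add: field_simps)
        moreover have "\<bar>fst (X0 i) - z\<bar> \<le> R0 / \<sigma>" unfolding fX0 using fY0R[OF i] \<sigma>0
          by (simp add: divide_right_mono)
        moreover have "R0 / \<sigma> + (T * \<gamma> * Nr / (4 * pi * \<delta>)) / \<sigma> \<le> h0 / 2" using hA by (simp add: add_divide_distrib)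
        ultimately have ax: "\<bar>fst (X i t) - z\<bar> \<le> h0" using T4 by linarith
        have rx: "\<bar>snd (X i t) - snd (X0 i)\<bar> \<le> \<delta> / \<sigma>" using bX t i divide_pos_pos[OF \<delta> \<sigma>0] by fastforce
        show "X i t \<in> regionA (fst Xs) \<epsilon> (snd (X0 i)) (d0 N Y0) h0"
          unfolding regionA_def sq \<delta>_def[symmetric] z_def[symmetric] using ax rx by simp
        have sXt: "snd (Xtilde \<gamma> Xs \<epsilon> Y i t) = r + snd (Y i t) / \<sigma>" unfolding Xt r_def ez_def by simp
        have fXt: "fst (Xtilde \<gamma> Xs \<epsilon> Y i t) = z + \<gamma> / (4 * pi * r) * t + fst (Y i t) / \<sigma>"
          unfolding Xt z_def ez_def by simp
        have "snd (Xtilde \<gamma> Xs \<epsilon> Y i t) - snd (X0 i) = (snd (Y i t) - snd (Y0 i)) / \<sigma>"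
          unfolding sXt sX0 by (simp add: diff_divide_distrib)
        moreover have "\<bar>snd (Y i t) - snd (Y0 i)\<bar> \<le> \<delta>" using bY t i \<delta> by fastforce
        ultimately have rxt: "\<bar>snd (Xtilde \<gamma> Xs \<epsilon> Y i t) - snd (X0 i)\<bar> \<le> \<delta> / \<sigma>"
          using \<sigma>0 by (simp add: divide_right_mono)
        have "norm (Y i t - Y i 0) \<le> MY * t"
          by (rule deriv_bound[of T "Y i" "\<lambda>s. velY N \<gamma> r (\<lambda>k. Y k s) i" MY t]) (use dY bndY inGY i t in auto)
        then have "\<bar>fst (Y i t) - fst (Y0 i)\<bar> \<le> MY * t"
          using norm_fst_le'[of "Y i t - Y i 0"] Y0' i by simp
        moreover have "MY * t \<le> T * MY" using mult_left_mono[of t T MY] t MY by (simp add: mult.commute)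
        ultimately have "\<bar>fst (Y i t)\<bar> \<le> R0 + T * MY" using fY0R[OF i] by linarith
        then have "\<bar>fst (Y i t) / \<sigma>\<bar> \<le> (R0 + T * MY) / \<sigma>" using \<sigma>0 by (simp add: divide_right_mono)
        moreover have "\<bar>\<gamma> / (4 * pi * r) * t\<bar> \<le> h0 / 2"
        proof -
          have "\<bar>\<gamma> / (4 * pi * r) * t\<bar> = \<gamma> / (4 * pi * r) * t" using gpos r t by simp
          also have "\<dots> \<le> \<gamma> / (4 * pi * r) * T" using gpos r t by (intro mult_left_mono) auto
          also have "\<dots> \<le> T * \<gamma> / (2 * pi * r)" using gpos r T by (simp add: field_simps)
          finally show ?thesis using T4 by linarith
        qed
        ultimately have axt: "\<bar>fst (Xtilde \<gamma> Xs \<epsilon> Y i t) - z\<bar> \<le> h0" unfolding fXt using hB by linarith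
        show "Xtilde \<gamma> Xs \<epsilon> Y i t \<in> regionA (fst Xs) \<epsilon> (snd (X0 i)) (d0 N Y0) h0"
          unfolding regionA_def sq \<delta>_def[symmetric] z_def[symmetric] using axt rxt by simp
      qed
    qed
    show ?thesis unfolding X0_def[symmetric] r_def[symmetric] using Xex part2 by blast
  qed
  have Yex: "\<exists>Y. is_Y_sol N \<gamma> (snd Xs) Y0 T Y" using YsolEx by blast
  show ?thesis
    apply (rule exI[of _ T], rule conjI[OF T])
    apply (rule exI[of _ \<epsilon>0], rule conjI[OF \<epsilon>0(1)])
    apply (rule exI[of _ C], rule conjI[OF C])
    using \<epsilon>0(2) Yex main by blast
qed


end
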